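(* Let $(b_N)$ be positive integers with $b_N\to\infty$ and $b_N=o(N)$, let $\sim$ and $(X^{(N)}_{ij})$ satisfy the hypotheses (O1)–(O3), symmetry, centering, unit variance, uniformly bounded moments and independence across $\sim$-classes (as below), and let $A^{(N)}:=\frac{1}{\sqrt{2b_N}}\big(\chi_{[0,b_N]}(|i-j|)X^{(N)}_{ij}\big)_{1\le i,j\le N}$. For $k\in\mathbb N$ set $Y^{(k)}_N:=\frac1N\operatorname{tr}(A^{(N)})^k$. Then $\lim_{N\to\infty}\mathbb V(Y^{(k)}_N)=0$ for all $k\in\mathbb N$.
   Context: Hypotheses: for each $N$, $\sim$ is an equivalence relation on $\{1,\dots,N\}^2$ with $(p,q)\sim(q,p)$ for all $p,q$, satisfying, as $N\to\infty$: (O1) $\max_p\#\{(q,r,s)\in\{1,\dots,N\}^3:(p,q)\sim(r,s)\}=o(b_N^2)$; (O2) $\max_{p,q,r}\#\{s\in\{1,\dots,N\}:(p,q)\sim(r,s)\}\le B<\infty$ with $B$ independent of $N$; (O3) $\#\{(p,q,r)\in\{1,\dots,N\}^3:(p,q)\sim(q,r),\ r\neq p\}=o(b_N^2)$. The $X^{(N)}_{ij}$ are real random variables with $X^{(N)}_{ij}=X^{(N)}_{ji}$, $\mathbb EX^{(N)}_{ij}=0$, $\mathbb E(X^{(N)}_{ij})^2=1$, $\sup_N\max_{i,j}\mathbb E|X^{(N)}_{ij}|^k<\infty$ for all $k$, and for each $N$ the families $\{X^{(N)}_{pq}:(p,q)\in C\}$, $C$ ranging over the distinct $\sim$-classes,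 are mutually independent. $\chi_{[0,b_N]}(|i-j|)$ equals $1$ if $|i-j|\le b_N$ and $0$ otherwise; $\mathbb V$ denotes variance. *)

theory Defs
  imports "HOL-Probability.Probability" "HOL-Library.Landau_Symbols"
begin

text \<open>Square matrices indexed by \<open>{1..N}\<close>, represented as functions \<open>nat \<Rightarrow> nat \<Rightarrow> real\<close>.\<close>

fun mat_pow :: "nat \<Rightarrow> (nat \<Rightarrow> nat \<Rightarrow> real) \<Rightarrow> nat \<Rightarrow> nat \<Rightarrow> nat \<Rightarrow> real" where
  "mat_pow N A 0 i j = (if i = j then 1 else 0)"
| "mat_pow N A (Suc k) i j = (\<Sum>l\<in>{1..N}. mat_pow N A k i l * A l j)"

definition mat_trace :: "nat \<Rightarrow> (nat \<Rightarrow> nat \<Rightarrow> real) \<Rightarrow> real" where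
  "mat_trace N A = (\<Sum>i\<in>{1..N}. A i i)"

definition band_chi :: "nat \<Rightarrow> nat \<Rightarrow> nat \<Rightarrow> real" where
  "band_chi b i j = (if nat \<bar>int i - int j\<bar> \<le> b then 1 else 0)"

definition band_matrix ::
  "(nat \<Rightarrow> nat) \<Rightarrow> (nat \<Rightarrow> nat \<Rightarrow> nat \<Rightarrow> 'a \<Rightarrow> real) \<Rightarrow> nat \<Rightarrow> 'a \<Rightarrow> nat \<Rightarrow> nat \<Rightarrow> real" where
  "band_matrix b X N \<omega> i j = band_chi (b N) i j * X N i j \<omega> / sqrt (2 * real (b N))"

definition Y_stat ::
  "(nat \<Rightarrow> nat) \<Rightarrow> (nat \<Rightarrow> nat \<Rightarrow> nat \<Rightarrow> 'a \<Rightarrow> real) \<Rightarrow> nat \<Rightarrow> nat \<Rightarrow> 'a \<Rightarrow> real" where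
  "Y_stat b X k N \<omega> = mat_trace N (mat_pow N (band_matrix b X N \<omega>) k) / real N"

end

theory Submission
  imports Defs
begin

definition walkW :: "nat \<Rightarrow> nat \<Rightarrow> nat \<Rightarrow> nat \<Rightarrow> (nat \<Rightarrow> nat) set" where
  "walkW N k i j = {w \<in> PiE {..k} (\<lambda>_. {1..N}). w 0 = i \<and> w k = j}"

lemma finite_walkW: "finite (walkW N k i j)"
  unfolding walkW_def by (rule finite_subset[OF _ finite_PiE[of "{..k}" "\<lambda>_. {1..N}"]]) auto

lemma mat_pow_walk:
  assumes "i \<in> {1..N}" "j \<in> {1..N}"
  shows "mat_pow N A k i j = (\<Sum>w\<in>walkW N k i j. \<Prod>m<k. A (w m) (w (Suc m)))"
  using assms(2)
proof (induction k arbitrary: j)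
  case 0
  show ?case
  proof (cases "i = j")
    case True
    have "walkW N 0 i j = {restrict (\<lambda>_. i) {..0}}"
      using True assms(1) unfolding walkW_def by (auto simp: PiE_def extensional_def fun_eq_iff)
    then show ?thesis using True by simp
  next
    case False
    have "walkW N 0 i j = {}" using False unfolding walkW_def by auto
    then show ?thesis using False by simp
  qed
next
  case (Suc k)
  define ext where "ext = (\<lambda>(l::nat, w::nat \<Rightarrow> nat). w(Suc k := j))"
  have bij: "bij_betw ext (SIGMA l:{1..N}. walkW N k i l) (walkW N (Suc k) i j)"
  proof (rule bij_betwI[where g="\<lambda>w. (w k, restrict w {..k})"])
    show "ext \<in> (SIGMA l:{1..N}. walkW N k i l) \<rightarrow> walkW N (Suc k) i j"
      using Suc.prems unfolding ext_def walkW_def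
      by (auto simp: PiE_def extensional_def Pi_def)
    show "(\<lambda>w. (w k, restrict w {..k})) \<in> walkW N (Suc k) i j \<rightarrow> (SIGMA l:{1..N}. walkW N k i l)"
      unfolding walkW_def by (auto simp: PiE_def extensional_def Pi_def)
    show "(\<lambda>w. (w k, restrict w {..k})) (ext x) = x" if "x \<in> (SIGMA l:{1..N}. walkW N k i l)" for x
      using that unfolding ext_def walkW_def
      by (auto simp: PiE_def extensional_def fun_eq_iff split: prod.splits)
    show "ext ((\<lambda>w. (w k, restrict w {..k})) y) = y" if "y \<in> walkW N (Suc k) i j" for y
      using that unfolding ext_def walkW_def
      by (auto simp: PiE_def extensional_def fun_eq_iff le_Suc_eq)
  qed
  have "mat_pow N A (Suc k) i j = (\<Sum>l\<in>{1..N}. mat_pow N A k i l * A l j)" by simp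
  also have "\<dots> = (\<Sum>l\<in>{1..N}. \<Sum>w\<in>walkW N k i l. (\<Prod>m<k. A (w m) (w (Suc m))) * A l j)"
    using Suc.IH by (simp add: sum_distrib_right)
  also have "\<dots> = (\<Sum>l\<in>{1..N}. \<Sum>w\<in>walkW N k i l. (\<Prod>m<Suc k. A (ext (l,w) m) (ext (l,w) (Suc m))))"
  proof (intro sum.cong refl)
    fix l w assume lw: "l \<in> {1..N}" "w \<in> walkW N k i l"
    have "(\<Prod>m<Suc k. A (ext (l, w) m) (ext (l, w) (Suc m))) =
          (\<Prod>m<k. A (ext (l, w) m) (ext (l, w) (Suc m))) * A (ext (l,w) k) (ext (l,w) (Suc k))"
      by simp
    also have "(\<Prod>m<k. A (ext (l, w) m) (ext (l, w) (Suc m))) = (\<Prod>m<k. A (w m) (w (Suc m)))"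
      unfolding ext_def by (intro prod.cong) auto
    finally have eq: "(\<Prod>m<Suc k. A (ext (l, w) m) (ext (l, w) (Suc m))) =
          (\<Prod>m<k. A (w m) (w (Suc m))) * A (ext (l,w) k) (ext (l,w) (Suc k))" .
    have "ext (l,w) k = l" "ext (l,w) (Suc k) = j" using lw unfolding ext_def walkW_def by auto
    then show "(\<Prod>m<k. A (w m) (w (Suc m))) * A l j = (\<Prod>m<Suc k. A (ext (l, w) m) (ext (l, w) (Suc m)))"
      by (simp only: eq)
  qed
  also have "\<dots> = (\<Sum>(l,w)\<in>(SIGMA l:{1..N}. walkW N k i l). (\<Prod>m<Suc k. A (ext (l,w) m) (ext (l,w) (Suc m))))"
    by (rule sum.Sigma) (auto simp: finite_walkW)
  also have "\<dots> = (\<Sum>p\<in>(SIGMA l:{1..N}. walkW N k i l). (\<Prod>m<Suc k. A (ext p m) (ext p (Suc m))))"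
    by (intro sum.cong) auto
  also have "\<dots> = (\<Sum>w\<in>walkW N (Suc k) i j. \<Prod>m<Suc k. A (w m) (w (Suc m)))"
    by (rule sum.reindex_bij_betw[OF bij])
  finally show ?case .
qed

lemma trace_walk:
  assumes k: "k \<ge> 1"
  shows "mat_trace N (mat_pow N A k) =
    (\<Sum>u\<in>PiE {..<k} (\<lambda>_. {1..N}). \<Prod>m<k. A (u m) (u (Suc m mod k)))"
proof -
  define CW where "CW = {w \<in> PiE {..k} (\<lambda>_. {1..N}). w k = w 0}"
  have fCW: "finite CW" unfolding CW_def
    by (rule finite_subset[OF _ finite_PiE[of "{..k}" "\<lambda>_. {1..N}"]]) auto
  have "mat_trace N (mat_pow N A k) = (\<Sum>i\<in>{1..N}. \<Sum>w\<in>walkW N k i i. \<Prod>m<k. A (w m) (w (Suc m)))"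
    unfolding mat_trace_def by (intro sum.cong refl mat_pow_walk) auto
  also have "\<dots> = (\<Sum>i\<in>{1..N}. \<Sum>w\<in>{w\<in>CW. w 0 = i}. \<Prod>m<k. A (w m) (w (Suc m)))"
    by (intro sum.cong refl) (auto simp: walkW_def CW_def)
  also have "\<dots> = (\<Sum>w\<in>CW. \<Prod>m<k. A (w m) (w (Suc m)))"
    by (rule sum.group[OF fCW finite_atLeastAtMost]) (auto simp: CW_def PiE_def Pi_def)
  also have "\<dots> = (\<Sum>u\<in>PiE {..<k} (\<lambda>_. {1..N}). \<Prod>m<k. A (u m) (u (Suc m mod k)))"
  proof (rule sum.reindex_bij_witness[where i="\<lambda>u. restrict (\<lambda>m. if m = k then u 0 else u m) {..k}"
          and j="\<lambda>w. restrict w {..<k}"])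
    show "restrict (\<lambda>m. if m = k then restrict w {..<k} 0 else restrict w {..<k} m) {..k} = w"
      if "w \<in> CW" for w using that k unfolding CW_def
      by (auto simp: PiE_def extensional_def fun_eq_iff)
    show "restrict w {..<k} \<in> PiE {..<k} (\<lambda>_. {1..N})" if "w \<in> CW" for w
      using that unfolding CW_def by auto
    show "restrict (restrict (\<lambda>m. if m = k then u 0 else u m) {..k}) {..<k} = u"
      if "u \<in> PiE {..<k} (\<lambda>_. {1..N})" for u using that
      by (auto simp: PiE_def extensional_def fun_eq_iff)
    show "restrict (\<lambda>m. if m = k then u 0 else u m) {..k} \<in> CW"
      if "u \<in> PiE {..<k} (\<lambda>_. {1..N})" for u using that k unfolding CW_def
      by (auto simp: PiE_def Pi_def extensional_def)
    show "(\<Prod>m<k. A (restrict w {..<k} m) (restrict w {..<k} (Suc m mod k))) =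
          (\<Prod>m<k. A (w m) (w (Suc m)))" if "w \<in> CW" for w
    proof (intro prod.cong refl)
      fix m assume m: "m \<in> {..<k}"
      show "A (restrict w {..<k} m) (restrict w {..<k} (Suc m mod k)) = A (w m) (w (Suc m))"
      proof (cases "Suc m = k")
        case True then show ?thesis using m that k by (simp add: CW_def)
      next
        case False then have "Suc m < k" using m by auto
        then show ?thesis using m by simp
      qed
    qed
  qed
  finally show ?thesis .
qed


lemma (in prob_space) indep_prod:
  fixes Xf :: "nat \<times> nat \<Rightarrow> 'a \<Rightarrow> real"
  assumes eq: "equiv E R"
    and ind: "indep_vars (\<lambda>C. PiM C (\<lambda>_. borel)) (\<lambda>C \<omega>. \<lambda>pq\<in>C. Xf pq \<omega>) (E // R)"
    and fin: "finite I" "finite J" and edI: "ed ` I \<subseteq> E" and edJ: "ed' ` J \<subseteq> E"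
    and disj: "\<And>i j. i \<in> I \<Longrightarrow> j \<in> J \<Longrightarrow> (ed i, ed' j) \<notin> R"
    and intF: "integrable M (\<lambda>\<omega>. \<Prod>i\<in>I. Xf (ed i) \<omega>)"
    and intG: "integrable M (\<lambda>\<omega>. \<Prod>j\<in>J. Xf (ed' j) \<omega>)"
  shows "expectation (\<lambda>\<omega>. (\<Prod>i\<in>I. Xf (ed i) \<omega>) * (\<Prod>j\<in>J. Xf (ed' j) \<omega>))
       = expectation (\<lambda>\<omega>. \<Prod>i\<in>I. Xf (ed i) \<omega>) * expectation (\<lambda>\<omega>. \<Prod>j\<in>J. Xf (ed' j) \<omega>)"
proof -
  define K1 where "K1 = (\<lambda>i. R``{ed i}) ` I"
  define K2 where "K2 = (\<lambda>j. R``{ed' j}) ` J"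
  have K1: "K1 \<subseteq> E // R" using edI unfolding K1_def by (auto intro: quotientI)
  have K2: "K2 \<subseteq> E // R" using edJ unfolding K2_def by (auto intro: quotientI)
  have K12: "K1 \<inter> K2 = {}"
  proof (rule ccontr)
    assume "K1 \<inter> K2 \<noteq> {}"
    then obtain i j where ij: "i \<in> I" "j \<in> J" "R``{ed i} = R``{ed' j}" unfolding K1_def K2_def by auto
    then have "(ed i, ed' j) \<in> R" using eq_equiv_class_iff[OF eq] edI edJ by blast
    then show False using disj ij by blast
  qed
  have memI: "ed i \<in> R``{ed i}" if "i \<in> I" for i using that edI eq
    by (auto simp: equiv_def refl_on_def)
  have memJ: "ed' j \<in> R``{ed' j}" if "j \<in> J" for j using that edJ eq
    by (auto simp: equiv_def refl_on_def)
  define g1 where "g1 = (\<lambda>z. \<Prod>i\<in>I. z (R``{ed i}) (ed i) :: real)"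
  define g2 where "g2 = (\<lambda>z. \<Prod>j\<in>J. z (R``{ed' j}) (ed' j) :: real)"
  have m1: "g1 \<in> borel_measurable (PiM K1 (\<lambda>C. PiM C (\<lambda>_. borel)))"
    unfolding g1_def
  proof (intro borel_measurable_prod)
    fix i assume i: "i \<in> I"
    have C: "R``{ed i} \<in> K1" using i unfolding K1_def by auto
    have a: "(\<lambda>z. z (R``{ed i})) \<in> measurable (PiM K1 (\<lambda>C. PiM C (\<lambda>_. borel))) (PiM (R``{ed i}) (\<lambda>_. borel :: real measure))"
      using C by (rule measurable_component_singleton)
    have b: "(\<lambda>y. y (ed i)) \<in> measurable (PiM (R``{ed i}) (\<lambda>_. borel)) (borel :: real measure)"
      using memI[OF i] by (rule measurable_component_singleton)
    show "(\<lambda>z. z (R``{ed i}) (ed i) :: real) \<in> borel_measurable (PiM K1 (\<lambda>C. PiM C (\<lambda>_. borel)))"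
      using measurable_compose[OF a b] by simp
  qed
  have m2: "g2 \<in> borel_measurable (PiM K2 (\<lambda>C. PiM C (\<lambda>_. borel)))"
    unfolding g2_def
  proof (intro borel_measurable_prod)
    fix i assume i: "i \<in> J"
    have C: "R``{ed' i} \<in> K2" using i unfolding K2_def by auto
    have a: "(\<lambda>z. z (R``{ed' i})) \<in> measurable (PiM K2 (\<lambda>C. PiM C (\<lambda>_. borel))) (PiM (R``{ed' i}) (\<lambda>_. borel :: real measure))"
      using C by (rule measurable_component_singleton)
    have b: "(\<lambda>y. y (ed' i)) \<in> measurable (PiM (R``{ed' i}) (\<lambda>_. borel)) (borel :: real measure)"
      using memJ[OF i] by (rule measurable_component_singleton)
    show "(\<lambda>z. z (R``{ed' i}) (ed' i) :: real) \<in> borel_measurable (PiM K2 (\<lambda>C. PiM C (\<lambda>_. borel)))"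
      using measurable_compose[OF a b] by simp
  qed
  have iv: "indep_var borel (g1 \<circ> (\<lambda>\<omega>. restrict (\<lambda>C. \<lambda>pq\<in>C. Xf pq \<omega>) K1))
                      borel (g2 \<circ> (\<lambda>\<omega>. restrict (\<lambda>C. \<lambda>pq\<in>C. Xf pq \<omega>) K2))"
    by (rule indep_var_compose[OF indep_var_restrict[OF ind K12 K1 K2] m1 m2])
  have e1: "g1 \<circ> (\<lambda>\<omega>. restrict (\<lambda>C. \<lambda>pq\<in>C. Xf pq \<omega>) K1) = (\<lambda>\<omega>. \<Prod>i\<in>I. Xf (ed i) \<omega>)"
    unfolding g1_def comp_def
  proof (rule ext, rule prod.cong)
    fix \<omega> i assume i: "i \<in> I"
    have C: "R``{ed i} \<in> K1" using i unfolding K1_def by auto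
    show "restrict (\<lambda>C. \<lambda>pq\<in>C. Xf pq \<omega>) K1 (R``{ed i}) (ed i) = Xf (ed i) \<omega>"
      using C memI[OF i] by simp
  qed simp
  have e2: "g2 \<circ> (\<lambda>\<omega>. restrict (\<lambda>C. \<lambda>pq\<in>C. Xf pq \<omega>) K2) = (\<lambda>\<omega>. \<Prod>j\<in>J. Xf (ed' j) \<omega>)"
    unfolding g2_def comp_def
  proof (rule ext, rule prod.cong)
    fix \<omega> i assume i: "i \<in> J"
    have C: "R``{ed' i} \<in> K2" using i unfolding K2_def by auto
    show "restrict (\<lambda>C. \<lambda>pq\<in>C. Xf pq \<omega>) K2 (R``{ed' i}) (ed' i) = Xf (ed' i) \<omega>"
      using C memJ[OF i] by simp
  qed simp
  show ?thesis
    using indep_var_lebesgue_integral[OF iv[unfolded e1 e2] intF intG] .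
qed


lemma prod_abs_bound:
  fixes f :: "'i \<Rightarrow> real"
  assumes fin: "finite I"
  shows "\<bar>\<Prod>i\<in>I. f i\<bar> \<le> 1 + (\<Sum>i\<in>I. \<bar>f i\<bar> ^ card I)"
proof (cases "I = {}")
  case True then show ?thesis by simp
next
  case False
  define Mx where "Mx = Max ((\<lambda>i. \<bar>f i\<bar>) ` I)"
  have "Mx \<in> (\<lambda>i. \<bar>f i\<bar>) ` I"
    using Max_in[of "(\<lambda>i. \<bar>f i\<bar>) ` I"] fin False unfolding Mx_def by blast
  then obtain j where j: "j \<in> I" "Mx = \<bar>f j\<bar>" by blast
  have "\<bar>\<Prod>i\<in>I. f i\<bar> = (\<Prod>i\<in>I. \<bar>f i\<bar>)" by (simp add: abs_prod)
  also have "\<dots> \<le> (\<Prod>i\<in>I. Mx)"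
    by (intro prod_mono) (auto simp: Mx_def fin)
  also have "\<dots> = \<bar>f j\<bar> ^ card I" using j by simp
  also have "\<dots> \<le> (\<Sum>i\<in>I. \<bar>f i\<bar> ^ card I)"
    by (rule member_le_sum[OF j(1)]) (auto simp: fin)
  finally show ?thesis by simp
qed

lemma (in prob_space) var_sum:
  fixes Z :: "'i \<Rightarrow> 'a \<Rightarrow> real"
  assumes fin: "finite I" and intZ: "\<And>i. i \<in> I \<Longrightarrow> integrable M (Z i)"
    and intZZ: "\<And>i j. i \<in> I \<Longrightarrow> j \<in> I \<Longrightarrow> integrable M (\<lambda>\<omega>. Z i \<omega> * Z j \<omega>)"
  shows "variance (\<lambda>\<omega>. \<Sum>i\<in>I. w i * Z i \<omega>) =
    (\<Sum>i\<in>I. \<Sum>j\<in>I. w i * w j * (expectation (\<lambda>\<omega>. Z i \<omega> * Z j \<omega>) - expectation (Z i) * expectation (Z j)))"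
proof -
  define mu where "mu i = expectation (Z i)" for i
  have E: "expectation (\<lambda>\<omega>. \<Sum>i\<in>I. w i * Z i \<omega>) = (\<Sum>i\<in>I. w i * mu i)"
    unfolding mu_def using intZ by (simp add: integral_sum)
  have sq: "((\<Sum>i\<in>I. w i * Z i \<omega>) - (\<Sum>i\<in>I. w i * mu i))\<^sup>2 =
      (\<Sum>i\<in>I. \<Sum>j\<in>I. w i * w j * ((Z i \<omega> - mu i) * (Z j \<omega> - mu j)))" for \<omega>
  proof -
    have "(\<Sum>i\<in>I. w i * Z i \<omega>) - (\<Sum>i\<in>I. w i * mu i) = (\<Sum>i\<in>I. w i * (Z i \<omega> - mu i))"
      by (simp add: sum_subtractf right_diff_distrib)
    then show ?thesis
      by (simp add: power2_eq_square sum_product algebra_simps)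
  qed
  have intC: "integrable M (\<lambda>\<omega>. (Z i \<omega> - mu i) * (Z j \<omega> - mu j))" if "i \<in> I" "j \<in> I" for i j
  proof -
    have "(\<lambda>\<omega>. (Z i \<omega> - mu i) * (Z j \<omega> - mu j)) =
        (\<lambda>\<omega>. Z i \<omega> * Z j \<omega> - mu j * Z i \<omega> - mu i * Z j \<omega> + mu i * mu j)"
      by (auto simp: fun_eq_iff algebra_simps)
    then show ?thesis using intZ intZZ that by simp
  qed
  have EC: "expectation (\<lambda>\<omega>. (Z i \<omega> - mu i) * (Z j \<omega> - mu j)) =
      expectation (\<lambda>\<omega>. Z i \<omega> * Z j \<omega>) - mu i * mu j" if "i \<in> I" "j \<in> I" for i j
  proof -
    have "(\<lambda>\<omega>. (Z i \<omega> - mu i) * (Z j \<omega> - mu j)) =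
        (\<lambda>\<omega>. (Z i \<omega> * Z j \<omega> - mu j * Z i \<omega>) - (mu i * Z j \<omega> - mu i * mu j))"
      by (auto simp: fun_eq_iff algebra_simps)
    then have "expectation (\<lambda>\<omega>. (Z i \<omega> - mu i) * (Z j \<omega> - mu j)) =
        (expectation (\<lambda>\<omega>. Z i \<omega> * Z j \<omega>) - mu j * mu i) - (mu i * mu j - mu i * mu j)"
      using intZ intZZ that by (simp add: mu_def prob_space)
    then show ?thesis by simp
  qed
  have "variance (\<lambda>\<omega>. \<Sum>i\<in>I. w i * Z i \<omega>) =
      expectation (\<lambda>\<omega>. \<Sum>i\<in>I. \<Sum>j\<in>I. w i * w j * ((Z i \<omega> - mu i) * (Z j \<omega> - mu j)))"
    unfolding E sq ..
  also have "\<dots> = (\<Sum>i\<in>I. \<Sum>j\<in>I. w i * w j * expectation (\<lambda>\<omega>. (Z i \<omega> - mu i) * (Z j \<omega> - mu j)))"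
    using intC by (simp add: integral_sum)
  also have "\<dots> = (\<Sum>i\<in>I. \<Sum>j\<in>I. w i * w j * (expectation (\<lambda>\<omega>. Z i \<omega> * Z j \<omega>) - expectation (Z i) * expectation (Z j)))"
    using EC unfolding mu_def by (intro sum.cong refl) simp
  finally show ?thesis .
qed

lemma (in prob_space) prod_int:
  fixes Y :: "'i \<Rightarrow> 'a \<Rightarrow> real"
  assumes fin: "finite I" and meas: "\<And>i. i \<in> I \<Longrightarrow> Y i \<in> borel_measurable M"
    and mom: "\<And>i. i \<in> I \<Longrightarrow> integrable M (\<lambda>\<omega>. \<bar>Y i \<omega>\<bar> ^ card I) \<and> expectation (\<lambda>\<omega>. \<bar>Y i \<omega>\<bar> ^ card I) \<le> C"
  shows "integrable M (\<lambda>\<omega>. \<Prod>i\<in>I. Y i \<omega>)"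
    and "\<bar>expectation (\<lambda>\<omega>. \<Prod>i\<in>I. Y i \<omega>)\<bar> \<le> 1 + real (card I) * C"
proof -
  define g where "g \<omega> = 1 + (\<Sum>i\<in>I. \<bar>Y i \<omega>\<bar> ^ card I)" for \<omega>
  have ig: "integrable M g" unfolding g_def
  proof (rule Bochner_Integration.integrable_add)
    show "integrable M (\<lambda>\<omega>. 1::real)" by simp
    show "integrable M (\<lambda>\<omega>. \<Sum>i\<in>I. \<bar>Y i \<omega>\<bar> ^ card I)" by (rule Bochner_Integration.integrable_sum) (use mom in blast)
  qed
  have bd: "\<bar>\<Prod>i\<in>I. Y i \<omega>\<bar> \<le> g \<omega>" for \<omega> unfolding g_def by (rule prod_abs_bound[OF fin])
  have mp: "(\<lambda>\<omega>. \<Prod>i\<in>I. Y i \<omega>) \<in> borel_measurable M" using meas by (intro borel_measurable_prod) auto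
  show ip: "integrable M (\<lambda>\<omega>. \<Prod>i\<in>I. Y i \<omega>)"
  proof (rule Bochner_Integration.integrable_bound[OF ig mp])
    have "\<bar>\<Prod>i\<in>I. Y i x\<bar> \<le> \<bar>g x\<bar>" for x using bd[of x] by linarith
    then show "AE x in M. norm (\<Prod>i\<in>I. Y i x) \<le> norm (g x)" by simp
  qed
  have "\<bar>expectation (\<lambda>\<omega>. \<Prod>i\<in>I. Y i \<omega>)\<bar> \<le> expectation (\<lambda>\<omega>. \<bar>\<Prod>i\<in>I. Y i \<omega>\<bar>)"
    by (rule Bochner_Integration.integral_abs_bound)
  also have "\<dots> \<le> expectation g"
    by (rule Bochner_Integration.integral_mono) (use ip ig bd in auto)
  also have "expectation g = 1 + (\<Sum>i\<in>I. expectation (\<lambda>\<omega>. \<bar>Y i \<omega>\<bar> ^ card I))"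
    unfolding g_def using mom by (simp add: integral_sum prob_space)
  also have "\<dots> \<le> 1 + (\<Sum>i\<in>I. C)"
    using mom by (intro add_left_mono sum_mono) auto
  finally show "\<bar>expectation (\<lambda>\<omega>. \<Prod>i\<in>I. Y i \<omega>)\<bar> \<le> 1 + real (card I) * C" by simp
qed


lemma card_restrict_insert:
  fixes G :: "('i \<Rightarrow> 'b) set"
  assumes fin: "finite G"
    and fib: "\<And>f. f \<in> (\<lambda>u. restrict u D) ` G \<Longrightarrow> card {u i | u. u \<in> G \<and> restrict u D = f} \<le> c"
  shows "card ((\<lambda>u. restrict u (insert i D)) ` G) \<le> c * card ((\<lambda>u. restrict u D) ` G)"
proof -
  let ?H = "(\<lambda>f. {u i | u. u \<in> G \<and> restrict u D = f})"
  have inj: "inj_on (\<lambda>g. (restrict g D, g i)) ((\<lambda>u. restrict u (insert i D)) ` G)"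
  proof (rule inj_onI)
    fix x y assume "x \<in> (\<lambda>u. restrict u (insert i D)) ` G" "y \<in> (\<lambda>u. restrict u (insert i D)) ` G"
      and eq: "(restrict x D, x i) = (restrict y D, y i)"
    then obtain u v where uv: "u \<in> G" "v \<in> G" "x = restrict u (insert i D)" "y = restrict v (insert i D)" by auto
    show "x = y" using eq unfolding uv by (auto simp: fun_eq_iff restrict_def split: if_splits)
  qed
  have sub: "(\<lambda>g. (restrict g D, g i)) ` ((\<lambda>u. restrict u (insert i D)) ` G)
      \<subseteq> Sigma ((\<lambda>u. restrict u D) ` G) ?H"
  proof
    fix z assume "z \<in> (\<lambda>g. (restrict g D, g i)) ` ((\<lambda>u. restrict u (insert i D)) ` G)"
    then obtain u where u: "u \<in> G" "z = (restrict (restrict u (insert i D)) D, restrict u (insert i D) i)" by auto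
    have "restrict (restrict u (insert i D)) D = restrict u D" by (auto simp: fun_eq_iff)
    then show "z \<in> Sigma ((\<lambda>u. restrict u D) ` G) ?H" using u by auto
  qed
  have finH: "finite (?H f)" for f
  proof -
    have "?H f \<subseteq> (\<lambda>u. u i) ` G" by auto
    then show ?thesis using fin finite_subset by blast
  qed
  have "card ((\<lambda>u. restrict u (insert i D)) ` G) = card ((\<lambda>g. (restrict g D, g i)) ` ((\<lambda>u. restrict u (insert i D)) ` G))"
    using card_image[OF inj] by simp
  also have "\<dots> \<le> card (Sigma ((\<lambda>u. restrict u D) ` G) ?H)"
    by (rule card_mono[OF _ sub]) (use fin finH in auto)
  also have "\<dots> = (\<Sum>f\<in>(\<lambda>u. restrict u D) ` G. card (?H f))"
    by (rule card_SigmaI) (use fin finH in auto)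
  also have "\<dots> \<le> (\<Sum>f\<in>(\<lambda>u. restrict u D) ` G. c)"
    by (rule sum_mono) (rule fib)
  also have "\<dots> = c * card ((\<lambda>u. restrict u D) ` G)" by simp
  finally show ?thesis .
qed


definition nx :: "nat \<Rightarrow> nat \<Rightarrow> nat" where
  "nx k m = (if m < k then Suc m mod k else k + Suc (m - k) mod k)"
definition Ed :: "nat \<Rightarrow> (nat \<Rightarrow> nat) \<Rightarrow> nat \<Rightarrow> nat \<times> nat" where
  "Ed k u m = (u m, u (nx k m))"
definition Fs :: "nat \<Rightarrow> nat set" where
  "Fs k = {m. 1 \<le> m \<and> m + 2 \<le> k} \<union> {m. k + 1 \<le> m \<and> m + 2 \<le> 2 * k}"
definition earl :: "nat \<Rightarrow> nat \<Rightarrow> nat set" where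
  "earl k m = {0, k} \<union> {m' \<in> Fs k. m' < m}"
definition newset :: "((nat \<times> nat) \<times> (nat \<times> nat)) set \<Rightarrow> nat \<Rightarrow> (nat \<Rightarrow> nat) \<Rightarrow> nat set" where
  "newset R k u = {m \<in> Fs k. \<forall>m'\<in>earl k m. (Ed k u m', Ed k u m) \<notin> R}"
definition allrep :: "((nat \<times> nat) \<times> (nat \<times> nat)) set \<Rightarrow> nat \<Rightarrow> (nat \<Rightarrow> nat) \<Rightarrow> bool" where
  "allrep R k u = (\<forall>m<2*k. \<exists>m'<2*k. m' \<noteq> m \<and> (Ed k u m, Ed k u m') \<in> R)"
definition bandu :: "nat \<Rightarrow> nat \<Rightarrow> (nat \<Rightarrow> nat) \<Rightarrow> bool" where
  "bandu b k u = (\<forall>m<2*k. nat \<bar>int (u m) - int (u (nx k m))\<bar> \<le> b)"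
definition Dj :: "nat \<Rightarrow> nat \<Rightarrow> nat set" where
  "Dj k j = {0, nx k 0, k, nx k k} \<union> Suc ` {m \<in> Fs k. m < j}"

lemma nx_lt: "k \<ge> 1 \<Longrightarrow> m < 2 * k \<Longrightarrow> nx k m < 2 * k"
proof -
  assume k: "k \<ge> 1" and m: "m < 2 * k"
  have a: "Suc m mod k < k" "Suc (m - k) mod k < k" using k by auto
  show ?thesis
  proof (cases "m < k")
    case True
    then have "nx k m = Suc m mod k" by (simp add: nx_def)
    then show ?thesis using a(1) by linarith
  next
    case False
    then have "nx k m = k + Suc (m - k) mod k" by (simp add: nx_def)
    then show ?thesis using a(2) by linarith
  qed
qed

lemma nx_Fs: "m \<in> Fs k \<Longrightarrow> nx k m = Suc m"
  unfolding nx_def Fs_def by auto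

lemma Fs_lt: "m \<in> Fs k \<Longrightarrow> Suc m < 2 * k"
  unfolding Fs_def by auto

lemma Fs_sub: "Fs k \<subseteq> {..<2*k}"
  unfolding Fs_def by auto

lemma finite_Fs: "finite (Fs k)"
  using Fs_sub finite_subset by blast

lemma card_Fs: "card (Fs k) \<le> 2 * k"
  using card_mono[OF _ Fs_sub] by auto

lemma Fs_in_Dj: "m \<in> Fs k \<Longrightarrow> m \<in> Dj k m"
proof -
  assume m: "m \<in> Fs k"
  show ?thesis
  proof (cases "m = 1 \<or> m = k + 1")
    case True
    then show ?thesis using m unfolding Dj_def nx_def Fs_def by auto
  next
    case False
    then have "m - 1 \<in> Fs k" "m - 1 < m" using m unfolding Fs_def by auto
    then have "Suc (m - 1) \<in> Dj k m" unfolding Dj_def by blast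
    then show ?thesis using m unfolding Fs_def by auto
  qed
qed

lemma Dj_mono: "j \<le> j' \<Longrightarrow> Dj k j \<subseteq> Dj k j'"
  unfolding Dj_def by auto

lemma Dj_full: "k \<ge> 1 \<Longrightarrow> {..<2*k} \<subseteq> Dj k (2*k)"
proof
  fix m assume k: "k \<ge> 1" and "m \<in> {..<2*k}"
  then have m: "m < 2 * k" by auto
  have "m = 0 \<or> m = k \<or> k = 1 \<or> (m = 1 \<and> k \<ge> 2) \<or> (m = k + 1 \<and> k \<ge> 2)
    \<or> (2 \<le> m \<and> m < k) \<or> k + 2 \<le> m" using k by arith
  then consider "m = 0" | "m = k" | "k = 1" | "m = 1" "k \<ge> 2" | "m = k + 1" "k \<ge> 2"
    | "2 \<le> m" "m < k" | "k + 2 \<le> m" by blast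
  then show "m \<in> Dj k (2*k)"
  proof cases
    case 3 then show ?thesis using m unfolding Dj_def nx_def by auto
  next
    case 4 then show ?thesis unfolding Dj_def nx_def by auto
  next
    case 5 then show ?thesis unfolding Dj_def nx_def by auto
  next
    case 6
    then have "m - 1 \<in> Fs k" "m - 1 < 2 * k" unfolding Fs_def by auto
    then have "Suc (m - 1) \<in> Dj k (2*k)" unfolding Dj_def by blast
    then show ?thesis using 6 by auto
  next
    case 7
    then have "m - 1 \<in> Fs k" "m - 1 < 2 * k" using m unfolding Fs_def by auto
    then have "Suc (m - 1) \<in> Dj k (2*k)" unfolding Dj_def by blast
    then show ?thesis using 7 by auto
  qed (auto simp: Dj_def)
qed

lemma Dj_Suc: "Dj k (Suc j) = (if j \<in> Fs k then insert (Suc j) (Dj k j) else Dj k j)"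
  unfolding Dj_def by (auto simp: less_Suc_eq)

lemma Dj_sub: "k \<ge> 1 \<Longrightarrow> Dj k j \<subseteq> {..<2*k}"
  unfolding Dj_def using Fs_lt nx_lt[of k 0] nx_lt[of k k] by auto

locale cnt =
  fixes N k b B :: nat and R :: "((nat \<times> nat) \<times> (nat \<times> nat)) set"
  assumes k1: "k \<ge> 1" and eqR: "equiv ({1..N}\<times>{1..N}) R"
    and O2: "\<And>p q r. p \<in> {1..N} \<Longrightarrow> q \<in> {1..N} \<Longrightarrow> r \<in> {1..N} \<Longrightarrow>
               card {s \<in> {1..N}. ((p, q), (r, s)) \<in> R} \<le> B"
begin

lemma Ed_in: "u \<in> PiE {..<2*k} (\<lambda>_. {1..N}) \<Longrightarrow> m < 2*k \<Longrightarrow> Ed k u m \<in> {1..N}\<times>{1..N}"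
  unfolding Ed_def using nx_lt[OF k1, of m] by (auto simp: PiE_def Pi_def)

lemma newset_card:
  assumes u: "u \<in> PiE {..<2*k} (\<lambda>_. {1..N})" and ar: "allrep R k u"
  shows "card (newset R k u) + 1 \<le> k"
proof -
  define cl where "cl = (\<lambda>m. R``{Ed k u m})"
  define Cl where "Cl = cl ` {..<2*k}"
  have relcl: "(cl m = cl m') \<longleftrightarrow> (Ed k u m, Ed k u m') \<in> R" if "m < 2*k" "m' < 2*k" for m m'
    using equiv_class_eq_iff[OF eqR, of "Ed k u m" "Ed k u m'"] Ed_in[OF u that(1)] Ed_in[OF u that(2)]
    unfolding cl_def by auto
  have fCl: "finite Cl" unfolding Cl_def by auto
  have "(\<Sum>c\<in>Cl. \<Sum>m\<in>{m\<in>{..<2*k}. cl m = c}. (1::nat)) = (\<Sum>m\<in>{..<2*k}. 1)"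
    by (rule sum.group) (auto simp: Cl_def)
  then have sumeq: "(\<Sum>c\<in>Cl. card {m\<in>{..<2*k}. cl m = c}) = 2 * k" by simp
  have ge2: "2 \<le> card {m\<in>{..<2*k}. cl m = c}" if cC: "c \<in> Cl" for c
  proof -
    obtain m0 where m0: "m0 < 2*k" "c = cl m0" using cC unfolding Cl_def by blast
    obtain m' where m': "m' < 2*k" "m' \<noteq> m0" "(Ed k u m0, Ed k u m') \<in> R"
      using ar m0(1) unfolding allrep_def by blast
    have "cl m' = c" using relcl[OF m0(1) m'(1)] m' m0 by simp
    then have "{m0, m'} \<subseteq> {m\<in>{..<2*k}. cl m = c}" using m0 m' by auto
    then have "card {m0, m'} \<le> card {m\<in>{..<2*k}. cl m = c}" by (intro card_mono) auto
    then show ?thesis using m'(2) by simp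
  qed
  have "2 * card Cl \<le> 2 * k"
  proof -
    have "(\<Sum>c\<in>Cl. 2) \<le> (\<Sum>c\<in>Cl. card {m\<in>{..<2*k}. cl m = c})"
      by (rule sum_mono) (rule ge2)
    then show ?thesis using sumeq by (simp add: mult.commute)
  qed
  then have cardCl: "card Cl \<le> k" by simp
  have n0: "0 \<notin> newset R k u" unfolding newset_def Fs_def by auto
  have inj: "inj_on cl (insert 0 (newset R k u))"
  proof (rule inj_onI)
    fix x y assume x: "x \<in> insert 0 (newset R k u)" and y: "y \<in> insert 0 (newset R k u)" and eq: "cl x = cl y"
    have lt: "m < 2 * k" if "m \<in> insert 0 (newset R k u)" for m
      using that k1 Fs_sub unfolding newset_def by auto
    have key: "False" if "a \<in> insert 0 (newset R k u)" "c \<in> insert 0 (newset R k u)" "a < c" "cl a = cl c" for a c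
    proof -
      have c: "c \<in> newset R k u" using that by auto
      then have cF: "c \<in> Fs k" unfolding newset_def by auto
      have "a \<in> earl k c" using that unfolding earl_def newset_def by auto
      then have "(Ed k u a, Ed k u c) \<notin> R" using c unfolding newset_def by auto
      then show False using relcl[OF lt[OF that(1)] lt[OF that(2)]] that(4) by simp
    qed
    show "x = y"
    proof (rule ccontr)
      assume "x \<noteq> y"
      then have "x < y \<or> y < x" by auto
      then show False using key[OF x y] key[OF y x] eq by auto
    qed
  qed
  have "card (insert 0 (newset R k u)) \<le> card Cl"
  proof (rule card_inj_on_le[OF inj _ fCl])
    show "cl ` insert 0 (newset R k u) \<subseteq> Cl"
      unfolding Cl_def newset_def using k1 Fs_sub by auto
  qed
  moreover have "finite (newset R k u)" using finite_Fs unfolding newset_def by auto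
  ultimately show ?thesis using n0 cardCl by simp
qed

definition "G0 = {u \<in> PiE {..<2*k} (\<lambda>_. {1..N}). (Ed k u 0, Ed k u k) \<in> R \<and> allrep R k u \<and> bandu b k u}"
definition "GS S = {u \<in> G0. newset R k u = S}"
definition "cc S m = (if m \<in> S then 2*b+1 else 2*k*B+1)"
definition "TT = {(p,q,r,s). p \<in> {1..N} \<and> q \<in> {1..N} \<and> r \<in> {1..N} \<and> s \<in> {1..N} \<and> ((p,q),(r,s)) \<in> R}"

lemma finite_G0: "finite G0"
  unfolding G0_def by (rule finite_subset[OF _ finite_PiE[of "{..<2*k}" "\<lambda>_. {1..N}"]]) auto

lemma finite_GS: "finite (GS S)"
  unfolding GS_def using finite_G0 by auto

lemma card_band: "card {x \<in> {1..N}. nat \<bar>int c - int x\<bar> \<le> b} \<le> 2*b+1"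
proof -
  have "{x \<in> {1..N}. nat \<bar>int c - int x\<bar> \<le> b} \<subseteq> {c - b..c + b}" by auto
  then have "card {x \<in> {1..N}. nat \<bar>int c - int x\<bar> \<le> b} \<le> card {c - b..c + b}"
    by (intro card_mono) auto
  also have "\<dots> \<le> 2*b+1" by simp
  finally show ?thesis .
qed

lemma earl_in_Dj:
  assumes j: "j \<in> Fs k" and m': "m' \<in> earl k j"
  shows "m' \<in> Dj k j" "nx k m' \<in> Dj k j"
proof -
  consider "m' = 0" | "m' = k" | "m' \<in> Fs k" "m' < j" using m' unfolding earl_def by auto
  then have "m' \<in> Dj k j \<and> nx k m' \<in> Dj k j"
  proof cases
    case 3
    have "m' \<in> Dj k j" using Fs_in_Dj[OF 3(1)] Dj_mono[of m' j k] 3(2) by auto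
    moreover have "nx k m' \<in> Dj k j" using 3 nx_Fs[OF 3(1)] unfolding Dj_def by auto
    ultimately show ?thesis by simp
  qed (auto simp: Dj_def)
  then show "m' \<in> Dj k j" "nx k m' \<in> Dj k j" by auto
qed

lemma fiber_bound:
  assumes j: "j \<in> Fs k" and f: "f \<in> (\<lambda>u. restrict u (Dj k j)) ` GS S"
  shows "card {u (Suc j) | u. u \<in> GS S \<and> restrict u (Dj k j) = f} \<le> cc S j"
proof -
  obtain u0 where u0: "u0 \<in> GS S" "f = restrict u0 (Dj k j)" using f by auto
  have u0P: "u0 \<in> PiE {..<2*k} (\<lambda>_. {1..N})" using u0 unfolding GS_def G0_def by auto
  have fval: "f m \<in> {1..N}" if "m \<in> Dj k j" for m
    using that u0 u0P Dj_sub[OF k1] by (auto simp: PiE_def Pi_def)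
  have jD: "j \<in> Dj k j" using Fs_in_Dj[OF j] .
  show ?thesis
  proof (cases "j \<in> S")
    case True
    have sub: "{u (Suc j) | u. u \<in> GS S \<and> restrict u (Dj k j) = f} \<subseteq> {x \<in> {1..N}. nat \<bar>int (f j) - int x\<bar> \<le> b}"
    proof safe
      fix u assume u: "u \<in> GS S" "f = restrict u (Dj k j)"
      have uP: "u \<in> PiE {..<2*k} (\<lambda>_. {1..N})" "bandu b k u" using u unfolding GS_def G0_def by auto
      show "u (Suc j) \<in> {1..N}" using uP Fs_lt[OF j] by (auto simp: PiE_def Pi_def)
      have "nat \<bar>int (u j) - int (u (nx k j))\<bar> \<le> b" using uP(2) Fs_lt[OF j] unfolding bandu_def by auto
      then show "nat \<bar>int (restrict u (Dj k j) j) - int (u (Suc j))\<bar> \<le> b"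
        using jD nx_Fs[OF j] by simp
    qed
    have "card {u (Suc j) | u. u \<in> GS S \<and> restrict u (Dj k j) = f} \<le> card {x \<in> {1..N}. nat \<bar>int (f j) - int x\<bar> \<le> b}"
      by (rule card_mono[OF _ sub]) auto
    also have "\<dots> \<le> 2*b+1" by (rule card_band)
    finally show ?thesis using True unfolding cc_def by simp
  next
    case False
    define A where "A = (\<Union>m'\<in>earl k j. {s \<in> {1..N}. ((f m', f (nx k m')), (f j, s)) \<in> R})"
    have sub: "{u (Suc j) | u. u \<in> GS S \<and> restrict u (Dj k j) = f} \<subseteq> A"
    proof safe
      fix u assume u: "u \<in> GS S" "f = restrict u (Dj k j)"
      have uP: "u \<in> PiE {..<2*k} (\<lambda>_. {1..N})" "newset R k u = S" using u unfolding GS_def G0_def by auto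
      have "j \<notin> newset R k u" using uP(2) False by simp
      then obtain m' where m': "m' \<in> earl k j" "(Ed k u m', Ed k u j) \<in> R" using j unfolding newset_def by auto
      have "u m' = f m'" "u (nx k m') = f (nx k m')" "u j = f j"
        using earl_in_Dj[OF j m'(1)] jD u(2) by auto
      then have "((f m', f (nx k m')), (f j, u (Suc j))) \<in> R" using m'(2) nx_Fs[OF j] unfolding Ed_def by simp
      moreover have "u (Suc j) \<in> {1..N}" using uP Fs_lt[OF j] by (auto simp: PiE_def Pi_def)
      ultimately have "u (Suc j) \<in> {s \<in> {1..N}. ((f m', f (nx k m')), (f j, s)) \<in> R}" by blast
      then show "u (Suc j) \<in> A" unfolding A_def using m'(1) by blast
    qed
    have fe: "finite (earl k j)" unfolding earl_def using finite_Fs by auto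
    have "card {u (Suc j) | u. u \<in> GS S \<and> restrict u (Dj k j) = f} \<le> card A"
      by (rule card_mono[OF _ sub]) (auto simp: A_def fe)
    also have "\<dots> \<le> (\<Sum>m'\<in>earl k j. card {s \<in> {1..N}. ((f m', f (nx k m')), (f j, s)) \<in> R})"
      unfolding A_def by (rule card_UN_le[OF fe])
    also have "\<dots> \<le> (\<Sum>m'\<in>earl k j. B)"
    proof (rule sum_mono)
      fix m' assume m': "m' \<in> earl k j"
      show "card {s \<in> {1..N}. ((f m', f (nx k m')), (f j, s)) \<in> R} \<le> B"
        using O2 fval earl_in_Dj[OF j m'] jD by blast
    qed
    also have "\<dots> = card (earl k j) * B" by simp
    also have "\<dots> \<le> 2 * k * B"
    proof -
      have "earl k j \<subseteq> {..<2*k}" unfolding earl_def using Fs_sub k1 by auto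
      then have "card (earl k j) \<le> 2 * k" using card_mono[of "{..<2*k}"] by fastforce
      then show ?thesis by simp
    qed
    finally show ?thesis using False unfolding cc_def by simp
  qed
qed

lemma stage:
  "card ((\<lambda>u. restrict u (Dj k j)) ` GS S) \<le> card ((\<lambda>u. restrict u (Dj k 0)) ` GS S) * (\<Prod>m\<in>{m\<in>Fs k. m < j}. cc S m)"
proof (induction j)
  case 0
  then show ?case by simp
next
  case (Suc j)
  show ?case
  proof (cases "j \<in> Fs k")
    case True
    have "card ((\<lambda>u. restrict u (Dj k (Suc j))) ` GS S) = card ((\<lambda>u. restrict u (insert (Suc j) (Dj k j))) ` GS S)"
      using True by (simp add: Dj_Suc)
    also have "\<dots> \<le> cc S j * card ((\<lambda>u. restrict u (Dj k j)) ` GS S)"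
      by (rule card_restrict_insert[OF finite_GS fiber_bound[OF True]])
    also have "\<dots> \<le> cc S j * (card ((\<lambda>u. restrict u (Dj k 0)) ` GS S) * (\<Prod>m\<in>{m\<in>Fs k. m < j}. cc S m))"
      by (rule mult_le_mono2[OF Suc.IH])
    also have "\<dots> = card ((\<lambda>u. restrict u (Dj k 0)) ` GS S) * (\<Prod>m\<in>{m\<in>Fs k. m < Suc j}. cc S m)"
    proof -
      have "{m\<in>Fs k. m < Suc j} = insert j {m\<in>Fs k. m < j}" using True by auto
      moreover have "finite {m\<in>Fs k. m < j}" by auto
      ultimately show ?thesis by simp
    qed
    finally show ?thesis .
  next
    case False
    have "{m\<in>Fs k. m < Suc j} = {m\<in>Fs k. m < j}" using False by (auto simp: less_Suc_eq)
    then show ?thesis using Suc.IH False by (simp add: Dj_Suc)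
  qed
qed

end


context cnt
begin

lemma Dj_2k: "Dj k (2*k) = {..<2*k}"
  using Dj_full[OF k1] Dj_sub[OF k1] by auto

lemma card_GS: "card (GS S) \<le> card TT * (2*b+1)^(k-1) * (2*k*B+1)^(2*k)"
proof (cases "GS S = {}")
  case True then show ?thesis by simp
next
  case False
  then obtain u where u: "u \<in> GS S" by auto
  have uP: "u \<in> PiE {..<2*k} (\<lambda>_. {1..N})" "allrep R k u" "newset R k u = S"
    using u unfolding GS_def G0_def by auto
  have cS: "card S + 1 \<le> k" using newset_card[OF uP(1,2)] uP(3) by simp
  have SF: "S \<subseteq> Fs k" using uP(3) unfolding newset_def by auto
  have img: "(\<lambda>u. restrict u (Dj k (2*k))) ` GS S = GS S"
  proof -
    have "restrict v (Dj k (2*k)) = v" if "v \<in> GS S" for v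
      using that unfolding Dj_2k GS_def G0_def by (auto simp: PiE_def extensional_def fun_eq_iff)
    then show ?thesis by (auto simp: image_iff)
  qed
  have d0: "card ((\<lambda>u. restrict u (Dj k 0)) ` GS S) \<le> card TT"
  proof -
    let ?h = "\<lambda>f. (f 0, f (nx k 0), f k, f (nx k k))"
    have inj: "inj_on ?h ((\<lambda>u. restrict u (Dj k 0)) ` GS S)"
    proof (rule inj_onI)
      fix x y assume x: "x \<in> (\<lambda>u. restrict u (Dj k 0)) ` GS S" and y: "y \<in> (\<lambda>u. restrict u (Dj k 0)) ` GS S"
        and e: "?h x = ?h y"
      have D0: "Dj k 0 = {0, nx k 0, k, nx k k}" unfolding Dj_def by auto
      obtain v w where "x = restrict v (Dj k 0)" "y = restrict w (Dj k 0)" using x y by auto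
      then show "x = y" using e unfolding D0 by (auto simp: fun_eq_iff)
    qed
    have sub: "?h ` ((\<lambda>u. restrict u (Dj k 0)) ` GS S) \<subseteq> TT"
    proof safe
      fix v assume v: "v \<in> GS S"
      have vP: "v \<in> PiE {..<2*k} (\<lambda>_. {1..N})" "(Ed k v 0, Ed k v k) \<in> R" using v unfolding GS_def G0_def by auto
      have D: "0 \<in> Dj k 0" "nx k 0 \<in> Dj k 0" "k \<in> Dj k 0" "nx k k \<in> Dj k 0" unfolding Dj_def by auto
      have "Ed k v 0 \<in> {1..N}\<times>{1..N}" "Ed k v k \<in> {1..N}\<times>{1..N}" using Ed_in[OF vP(1)] k1 by auto
      then show "?h (restrict v (Dj k 0)) \<in> TT" using vP(2) D unfolding TT_def Ed_def by auto
    qed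
    have fTT: "finite TT"
      by (rule finite_subset[of _ "{1..N}\<times>{1..N}\<times>{1..N}\<times>{1..N}"]) (auto simp: TT_def)
    show ?thesis using card_inj_on_le[OF inj sub fTT] .
  qed
  have "card (GS S) = card ((\<lambda>u. restrict u (Dj k (2*k))) ` GS S)" using img by simp
  also have "\<dots> \<le> card ((\<lambda>u. restrict u (Dj k 0)) ` GS S) * (\<Prod>m\<in>{m\<in>Fs k. m < 2*k}. cc S m)"
    by (rule stage)
  also have "{m\<in>Fs k. m < 2*k} = Fs k" using Fs_sub by auto
  also have "(\<Prod>m\<in>Fs k. cc S m) = (2*b+1)^(card S) * (2*k*B+1)^(card (Fs k \<inter> - S))"
  proof -
    have "(\<Prod>m\<in>Fs k. cc S m) = (\<Prod>m\<in>Fs k \<inter> {x. x \<in> S}. 2*b+1) * (\<Prod>m\<in>Fs k \<inter> - {x. x \<in> S}. 2*k*B+1)"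
      unfolding cc_def by (rule prod.If_cases[OF finite_Fs])
    moreover have "Fs k \<inter> {x. x \<in> S} = S" using SF by auto
    ultimately show ?thesis by simp
  qed
  also have "card ((\<lambda>u. restrict u (Dj k 0)) ` GS S) * ((2*b+1)^(card S) * (2*k*B+1)^(card (Fs k \<inter> - S)))
      \<le> card TT * ((2*b+1)^(k-1) * (2*k*B+1)^(2*k))"
  proof (rule mult_le_mono[OF d0 mult_le_mono])
    show "(2*b+1)^(card S) \<le> (2*b+1)^(k-1)" using cS by (intro power_increasing) auto
    have "card (Fs k \<inter> - S) \<le> 2*k" using card_Fs[of k] card_mono[OF finite_Fs, of "Fs k \<inter> - S" k] by auto
    then show "(2*k*B+1)^(card (Fs k \<inter> - S)) \<le> (2*k*B+1)^(2*k)" by (intro power_increasing) auto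
  qed
  finally show ?thesis by (simp add: mult.assoc)
qed

lemma card_G0: "card G0 \<le> 4^k * card TT * (2*b+1)^(k-1) * (2*k*B+1)^(2*k)"
proof -
  have "G0 = (\<Union>S\<in>Pow (Fs k). GS S)"
  proof
    show "G0 \<subseteq> (\<Union>S\<in>Pow (Fs k). GS S)"
    proof
      fix u assume "u \<in> G0"
      moreover have "newset R k u \<in> Pow (Fs k)" unfolding newset_def by blast
      ultimately show "u \<in> (\<Union>S\<in>Pow (Fs k). GS S)" unfolding GS_def by blast
    qed
    show "(\<Union>S\<in>Pow (Fs k). GS S) \<subseteq> G0" unfolding GS_def by blast
  qed
  then have "card G0 \<le> (\<Sum>S\<in>Pow (Fs k). card (GS S))"
    using card_UN_le[of "Pow (Fs k)" GS] finite_Fs by simp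
  also have "\<dots> \<le> (\<Sum>S\<in>Pow (Fs k). card TT * (2*b+1)^(k-1) * (2*k*B+1)^(2*k))"
    by (rule sum_mono) (rule card_GS)
  also have "\<dots> = 2^(card (Fs k)) * (card TT * (2*b+1)^(k-1) * (2*k*B+1)^(2*k))"
    using finite_Fs by (simp add: card_Pow)
  also have "\<dots> \<le> 4^k * (card TT * (2*b+1)^(k-1) * (2*k*B+1)^(2*k))"
  proof (rule mult_le_mono1)
    have "(2::nat)^(card (Fs k)) \<le> 2^(2*k)" using card_Fs by (intro power_increasing) auto
    also have "(2::nat)^(2*k) = 4^k" by (simp add: power_mult)
    finally show "(2::nat)^(card (Fs k)) \<le> 4^k" .
  qed
  finally show ?thesis by (simp add: mult.assoc)
qed

lemma card_TT:
  "card TT \<le> (\<Sum>p\<in>{1..N}. card {(q, r, s). q \<in> {1..N} \<and> r \<in> {1..N} \<and> s \<in> {1..N} \<and> ((p, q), (r, s)) \<in> R})"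
proof -
  let ?S = "\<lambda>p. {(q, r, s). q \<in> {1..N} \<and> r \<in> {1..N} \<and> s \<in> {1..N} \<and> ((p, q), (r, s)) \<in> R}"
  have "TT = (\<Union>p\<in>{1..N}. (\<lambda>(q,r,s). (p,q,r,s)) ` ?S p)"
    unfolding TT_def by auto
  then have "card TT \<le> (\<Sum>p\<in>{1..N}. card ((\<lambda>(q,r,s). (p,q,r,s)) ` ?S p))"
    using card_UN_le[of "{1..N}"] by simp
  also have "\<dots> \<le> (\<Sum>p\<in>{1..N}. card (?S p))"
    by (intro sum_mono card_image_le) (rule finite_subset[of _ "{1..N}\<times>{1..N}\<times>{1..N}"], auto)
  finally show ?thesis .
qed

end


context cnt
begin

definition "sig i j m = (if m < k then (m + i) mod k else k + (m - k + j) mod k)"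

lemma sig_lt: "m < 2*k \<Longrightarrow> sig i j m < 2*k"
proof -
  assume m: "m < 2*k"
  have a: "(m + i) mod k < k" "(m - k + j) mod k < k" using k1 by auto
  show ?thesis
  proof (cases "m < k")
    case True then have "sig i j m = (m + i) mod k" unfolding sig_def by simp
    then show ?thesis using a(1) by linarith
  next
    case False then have "sig i j m = k + (m - k + j) mod k" unfolding sig_def by simp
    then show ?thesis using a(2) by linarith
  qed
qed

lemma sig_nx: "m < 2*k \<Longrightarrow> nx k (sig i j m) = sig i j (nx k m)"
proof -
  assume m: "m < 2*k"
  have kp: "k > 0" using k1 by auto
  show ?thesis
  proof (cases "m < k")
    case True
    have a: "(m + i) mod k < k" using kp by auto
    have b: "Suc m mod k < k" using kp by auto
    have "nx k (sig i j m) = Suc ((m + i) mod k) mod k" using True a unfolding sig_def nx_def by simp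
    also have "\<dots> = (Suc m + i) mod k" by (simp add: mod_Suc_eq)
    also have "\<dots> = (Suc m mod k + i) mod k" by (simp add: mod_add_left_eq)
    also have "\<dots> = sig i j (nx k m)" using True b unfolding sig_def nx_def by simp
    finally show ?thesis .
  next
    case False
    have a: "(m - k + j) mod k < k" using kp by auto
    have b: "Suc (m - k) mod k < k" using kp by auto
    have "nx k (sig i j m) = k + Suc ((m - k + j) mod k) mod k" using False a unfolding sig_def nx_def by simp
    also have "\<dots> = k + (Suc (m - k) + j) mod k" by (simp add: mod_Suc_eq)
    also have "\<dots> = k + (Suc (m - k) mod k + j) mod k" by (simp add: mod_add_left_eq)
    also have "\<dots> = sig i j (nx k m)" using False b unfolding sig_def nx_def by simp
    finally show ?thesis .
  qed
qed

lemma sig_inj: "inj_on (sig i j) {..<2*k}"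
proof (rule inj_onI)
  fix x y assume x: "x \<in> {..<2*k}" and y: "y \<in> {..<2*k}" and e: "sig i j x = sig i j y"
  have kp: "k > 0" using k1 by auto
  have lt: "(x + i) mod k < k" "(y + i) mod k < k" "(x - k + j) mod k < k" "(y - k + j) mod k < k" using kp by auto
  show "x = y"
  proof (cases "x < k"; cases "y < k")
    assume "x < k" "y < k"
    then have "(x + i) mod k = (y + i) mod k" using e unfolding sig_def by simp
    then have "x mod k = y mod k" using nat_mod_eq_iff by auto
    then show ?thesis using \<open>x < k\<close> \<open>y < k\<close> by simp
  next
    assume "x < k" "\<not> y < k" then show ?thesis using e lt unfolding sig_def by simp
  next
    assume "\<not> x < k" "y < k" then show ?thesis using e lt unfolding sig_def by simp
  next
    assume xy: "\<not> x < k" "\<not> y < k"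
    then have "(x - k + j) mod k = (y - k + j) mod k" using e unfolding sig_def by simp
    then have "(x - k) mod k = (y - k) mod k" using nat_mod_eq_iff by auto
    then show ?thesis using xy x y by simp
  qed
qed

lemma sig_surj: "sig i j ` {..<2*k} = {..<2*k}"
  by (rule endo_inj_surj) (use sig_inj sig_lt in auto)

lemma Ed_sig:
  assumes m: "m < 2*k"
  shows "Ed k (restrict (u \<circ> sig i j) {..<2*k}) m = Ed k u (sig i j m)"
  unfolding Ed_def using m nx_lt[OF k1 m] sig_nx[OF m] by simp

lemma card_Gij:
  assumes i: "i < k" and j: "j < k"
  shows "card {u \<in> PiE {..<2*k} (\<lambda>_. {1..N}). bandu b k u \<and> allrep R k u \<and> (Ed k u i, Ed k u (k + j)) \<in> R}
     \<le> card G0"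
proof -
  let ?G = "{u \<in> PiE {..<2*k} (\<lambda>_. {1..N}). bandu b k u \<and> allrep R k u \<and> (Ed k u i, Ed k u (k + j)) \<in> R}"
  let ?r = "\<lambda>u. restrict (u \<circ> sig i j) {..<2*k}"
  have inj: "inj_on ?r ?G"
  proof (rule inj_onI)
    fix u w assume u: "u \<in> ?G" and w: "w \<in> ?G" and e: "?r u = ?r w"
    have "u m = w m" if m: "m < 2*k" for m
    proof -
      have "m \<in> sig i j ` {..<2*k}" using m sig_surj by auto
      then obtain m' where m': "m' < 2*k" "m = sig i j m'" by auto
      have "?r u m' = ?r w m'" using e by simp
      then show ?thesis using m' by simp
    qed
    then show "u = w" using u w by (intro PiE_ext[of u "{..<2*k}" "\<lambda>_. {1..N}" w]) auto
  qed
  have sub: "?r ` ?G \<subseteq> G0"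
  proof safe
    fix u assume u: "u \<in> PiE {..<2*k} (\<lambda>_. {1..N})" "bandu b k u" "allrep R k u" "(Ed k u i, Ed k u (k + j)) \<in> R"
    have s0: "sig i j 0 = i" "sig i j k = k + j" using i j k1 unfolding sig_def by auto
    have "?r u \<in> PiE {..<2*k} (\<lambda>_. {1..N})" using u(1) sig_lt by (auto simp: PiE_def Pi_def)
    moreover have "(Ed k (?r u) 0, Ed k (?r u) k) \<in> R"
      using Ed_sig[of 0 u i j] Ed_sig[of k u i j] k1 s0 u(4) by simp
    moreover have "allrep R k (?r u)"
      unfolding allrep_def
    proof (intro allI impI)
      fix m assume m: "m < 2*k"
      obtain m'' where m'': "m'' < 2*k" "m'' \<noteq> sig i j m" "(Ed k u (sig i j m), Ed k u m'') \<in> R"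
        using u(3) sig_lt[OF m] unfolding allrep_def by blast
      have "m'' \<in> sig i j ` {..<2*k}" using m''(1) sig_surj by auto
      then obtain m' where m': "m' < 2*k" "m'' = sig i j m'" by auto
      have "m' \<noteq> m" using m' m'' by auto
      moreover have "(Ed k (?r u) m, Ed k (?r u) m') \<in> R"
        unfolding Ed_sig[OF m] Ed_sig[OF m'(1)] using m' m'' by simp
      ultimately show "\<exists>m'<2 * k. m' \<noteq> m \<and> (Ed k (?r u) m, Ed k (?r u) m') \<in> R"
        using m'(1) by blast
    qed
    moreover have "bandu b k (?r u)"
      unfolding bandu_def
    proof (intro allI impI)
      fix m assume m: "m < 2*k"
      have "Ed k (?r u) m = Ed k u (sig i j m)" by (rule Ed_sig[OF m])
      moreover have "nat \<bar>int (u (sig i j m)) - int (u (nx k (sig i j m)))\<bar> \<le> b"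
        using u(2) sig_lt[OF m] unfolding bandu_def by blast
      ultimately show "nat \<bar>int (?r u m) - int (?r u (nx k m))\<bar> \<le> b" unfolding Ed_def by simp
    qed
    ultimately show "?r u \<in> G0" unfolding G0_def by blast
  qed
  show ?thesis by (rule card_inj_on_le[OF inj sub finite_G0])
qed

lemma card_good:
  "card {u \<in> PiE {..<2*k} (\<lambda>_. {1..N}). bandu b k u \<and> allrep R k u \<and> (\<exists>i<k. \<exists>j<k. (Ed k u i, Ed k u (k + j)) \<in> R)}
     \<le> k * k * card G0"
proof -
  define G where "G = (\<lambda>i j. {u \<in> PiE {..<2*k} (\<lambda>_. {1..N}). bandu b k u \<and> allrep R k u \<and> (Ed k u i, Ed k u (k + j)) \<in> R})"
  have fG: "finite (G i j)" for i j unfolding G_def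
    by (rule finite_subset[OF _ finite_PiE[of "{..<2*k}" "\<lambda>_. {1..N}"]]) auto
  have sub: "{u \<in> PiE {..<2*k} (\<lambda>_. {1..N}). bandu b k u \<and> allrep R k u \<and> (\<exists>i<k. \<exists>j<k. (Ed k u i, Ed k u (k + j)) \<in> R)}
      \<subseteq> (\<Union>i\<in>{..<k}. \<Union>j\<in>{..<k}. G i j)"
  proof
    fix u assume "u \<in> {u \<in> PiE {..<2*k} (\<lambda>_. {1..N}). bandu b k u \<and> allrep R k u \<and> (\<exists>i<k. \<exists>j<k. (Ed k u i, Ed k u (k + j)) \<in> R)}"
    then have u: "u \<in> PiE {..<2*k} (\<lambda>_. {1..N})" "bandu b k u" "allrep R k u" "\<exists>i<k. \<exists>j<k. (Ed k u i, Ed k u (k + j)) \<in> R"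
      by auto
    then obtain i j where ij: "i < k" "j < k" "(Ed k u i, Ed k u (k + j)) \<in> R" by blast
    have "u \<in> G i j" unfolding G_def using u(1,2,3) ij(3) by blast
    then show "u \<in> (\<Union>i\<in>{..<k}. \<Union>j\<in>{..<k}. G i j)" using ij(1,2) by blast
  qed
  have "card {u \<in> PiE {..<2*k} (\<lambda>_. {1..N}). bandu b k u \<and> allrep R k u \<and> (\<exists>i<k. \<exists>j<k. (Ed k u i, Ed k u (k + j)) \<in> R)}
      \<le> card (\<Union>i\<in>{..<k}. \<Union>j\<in>{..<k}. G i j)"
    by (rule card_mono[OF _ sub]) (simp add: fG)
  also have "\<dots> \<le> (\<Sum>i\<in>{..<k}. card (\<Union>j\<in>{..<k}. G i j))" by (rule card_UN_le) simp
  also have "\<dots> \<le> (\<Sum>i\<in>{..<k}. \<Sum>j\<in>{..<k}. card (G i j))"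
    by (intro sum_mono card_UN_le) simp
  also have "\<dots> \<le> (\<Sum>i\<in>{..<k}. \<Sum>j\<in>{..<k}. card G0)"
    unfolding G_def by (intro sum_mono card_Gij) auto
  also have "\<dots> = k * k * card G0" by simp
  finally show ?thesis .
qed

end


locale fixN = prob_space M + cnt N k bb B R
  for M :: "'a measure" and N k bb B :: nat and R :: "((nat \<times> nat) \<times> (nat \<times> nat)) set" +
  fixes Xn :: "nat \<Rightarrow> nat \<Rightarrow> 'a \<Rightarrow> real" and Cf :: "nat \<Rightarrow> real"
  assumes meas: "\<And>i j. Xn i j \<in> borel_measurable M"
    and mean: "\<And>i j. i \<in> {1..N} \<Longrightarrow> j \<in> {1..N} \<Longrightarrow> integrable M (Xn i j) \<and> expectation (Xn i j) = 0"
    and mom: "\<And>m i j. i \<in> {1..N} \<Longrightarrow> j \<in> {1..N} \<Longrightarrow>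
        integrable M (\<lambda>\<omega>. \<bar>Xn i j \<omega>\<bar> ^ m) \<and> expectation (\<lambda>\<omega>. \<bar>Xn i j \<omega>\<bar> ^ m) \<le> Cf m"
    and ind: "indep_vars (\<lambda>C. PiM C (\<lambda>_. borel)) (\<lambda>C \<omega>. \<lambda>pq\<in>C. Xn (fst pq) (snd pq) \<omega>) (({1..N} \<times> {1..N}) // R)"
begin

definition "Xf pq = Xn (fst pq) (snd pq)"
definition "PZ I c \<omega> = (\<Prod>m\<in>I. Xf (Ed k c m) \<omega>)"

lemma PZ_int:
  assumes c: "c \<in> PiE {..<2*k} (\<lambda>_. {1..N})" and I: "I \<subseteq> {..<2*k}"
  shows "integrable M (PZ I c)" "\<bar>expectation (PZ I c)\<bar> \<le> 1 + real (card I) * Cf (card I)"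
proof -
  have fin: "finite I" using I finite_subset by blast
  have mm: "integrable M (\<lambda>\<omega>. \<bar>Xf (Ed k c i) \<omega>\<bar> ^ card I) \<and> expectation (\<lambda>\<omega>. \<bar>Xf (Ed k c i) \<omega>\<bar> ^ card I) \<le> Cf (card I)"
    if "i \<in> I" for i
  proof -
    have "Ed k c i \<in> {1..N}\<times>{1..N}" using Ed_in[OF c] that I by auto
    then show ?thesis unfolding Xf_def using mom by auto
  qed
  have ms: "Xf (Ed k c i) \<in> borel_measurable M" for i unfolding Xf_def using meas by simp
  show "integrable M (PZ I c)" unfolding PZ_def by (rule prod_int(1)[OF fin ms mm])
  show "\<bar>expectation (PZ I c)\<bar> \<le> 1 + real (card I) * Cf (card I)" unfolding PZ_def by (rule prod_int(2)[OF fin ms mm])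
qed

lemma PZ_indep:
  assumes c: "c \<in> PiE {..<2*k} (\<lambda>_. {1..N})" and I: "I \<subseteq> {..<2*k}" and J: "J \<subseteq> {..<2*k}"
    and disj: "\<And>i j. i \<in> I \<Longrightarrow> j \<in> J \<Longrightarrow> (Ed k c i, Ed k c j) \<notin> R"
  shows "expectation (\<lambda>\<omega>. PZ I c \<omega> * PZ J c \<omega>) = expectation (PZ I c) * expectation (PZ J c)"
proof -
  have ind': "indep_vars (\<lambda>C. PiM C (\<lambda>_. borel)) (\<lambda>C \<omega>. \<lambda>pq\<in>C. Xf pq \<omega>) (({1..N} \<times> {1..N}) // R)"
    using ind unfolding Xf_def .
  have fI: "finite I" "finite J" using I J finite_subset by auto
  have e: "Ed k c ` I \<subseteq> {1..N}\<times>{1..N}" "Ed k c ` J \<subseteq> {1..N}\<times>{1..N}"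
    using Ed_in[OF c] I J by (meson image_subsetI lessThan_iff subsetD)+
  show ?thesis unfolding PZ_def
    by (rule indep_prod[OF eqR ind' fI e disj PZ_int(1)[OF c I, unfolded PZ_def] PZ_int(1)[OF c J, unfolded PZ_def]])
qed

lemma PZ_zero:
  assumes c: "c \<in> PiE {..<2*k} (\<lambda>_. {1..N})" and I: "I \<subseteq> {..<2*k}" and m: "m \<in> I"
    and iso: "\<And>m'. m' < 2*k \<Longrightarrow> m' \<noteq> m \<Longrightarrow> (Ed k c m, Ed k c m') \<notin> R"
  shows "expectation (PZ I c) = 0"
proof -
  have fI: "finite I" using I finite_subset by blast
  have "PZ I c = (\<lambda>\<omega>. PZ {m} c \<omega> * PZ (I - {m}) c \<omega>)"
    unfolding PZ_def using prod.remove[OF fI m] by (auto simp: fun_eq_iff)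
  then have "expectation (PZ I c) = expectation (PZ {m} c) * expectation (PZ (I - {m}) c)"
    using PZ_indep[OF c, of "{m}" "I - {m}"] I m iso by auto
  moreover have "expectation (PZ {m} c) = 0"
  proof -
    have "Ed k c m \<in> {1..N}\<times>{1..N}" using Ed_in[OF c] I m by auto
    then show ?thesis unfolding PZ_def Xf_def using mean by auto
  qed
  ultimately show ?thesis by simp
qed

definition "comb u v = restrict (\<lambda>m. if m < k then u m else v (m - k)) {..<2*k}"
definition "Zw u \<omega> = (\<Prod>m<k. Xn (u m) (u (Suc m mod k)) \<omega>)"
definition "ch u = (\<Prod>m<k. band_chi bb (u m) (u (Suc m mod k)))"

lemma comb_in: "u \<in> PiE {..<k} (\<lambda>_. {1..N}) \<Longrightarrow> v \<in> PiE {..<k} (\<lambda>_. {1..N}) \<Longrightarrow>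
    comb u v \<in> PiE {..<2*k} (\<lambda>_. {1..N})"
  unfolding comb_def by (auto simp: PiE_def Pi_def)

lemma Ed_comb1: "m < k \<Longrightarrow> Ed k (comb u v) m = (u m, u (Suc m mod k))"
proof -
  assume m: "m < k"
  have "Suc m mod k < k" using m by auto
  then have "Suc m mod k < 2 * k" by linarith
  then show ?thesis using m unfolding Ed_def comb_def nx_def by auto
qed

lemma Ed_comb2: "m < k \<Longrightarrow> Ed k (comb u v) (k + m) = (v m, v (Suc m mod k))"
proof -
  assume m: "m < k"
  have "Suc m mod k < k" using m by auto
  then show ?thesis using m unfolding Ed_def comb_def nx_def by auto
qed

lemma Zw1: "Zw u = PZ {..<k} (comb u v)"
  unfolding Zw_def PZ_def Xf_def by (auto simp: fun_eq_iff Ed_comb1 intro!: prod.cong)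

lemma Zw2: "Zw v = PZ {k..<2*k} (comb u v)"
proof -
  have "PZ {k..<2*k} (comb u v) \<omega> = (\<Prod>m\<in>{0..<k}. Xf (Ed k (comb u v) (m + k)) \<omega>)" for \<omega>
    unfolding PZ_def using prod.shift_bounds_nat_ivl[of "\<lambda>m. Xf (Ed k (comb u v) m) \<omega>" 0 k k]
    by (simp add: mult_2)
  also have "(\<Prod>m\<in>{0..<k}. Xf (Ed k (comb u v) (m + k)) \<omega>) = Zw v \<omega>" for \<omega>
    unfolding Zw_def Xf_def using Ed_comb2 by (auto simp: add.commute atLeast0LessThan intro!: prod.cong)
  finally show ?thesis by (auto simp: fun_eq_iff)
qed

lemma PZ_split: "PZ {..<2*k} c \<omega> = PZ {..<k} c \<omega> * PZ {k..<2*k} c \<omega>"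
proof -
  have e: "{..<2*k} = {..<k} \<union> {k..<2*k}" by auto
  have "(\<Prod>m\<in>{..<k} \<union> {k..<2*k}. Xf (Ed k c m) \<omega>) = (\<Prod>m\<in>{..<k}. Xf (Ed k c m) \<omega>) * (\<Prod>m\<in>{k..<2*k}. Xf (Ed k c m) \<omega>)"
    by (rule prod.union_disjoint) auto
  then show ?thesis unfolding PZ_def e .
qed

lemma ch_comb: "ch u * ch v = (if bandu bb k (comb u v) then 1 else 0)"
proof -
  have bc: "band_chi bb p q = (if nat \<bar>int p - int q\<bar> \<le> bb then 1 else 0)" for p q unfolding band_chi_def by simp
  define g where "g m = band_chi bb (fst (Ed k (comb u v) m)) (snd (Ed k (comb u v) m))" for m
  have "ch u = (\<Prod>m\<in>{..<k}. g m)" unfolding ch_def g_def by (auto simp: Ed_comb1 intro!: prod.cong)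
  moreover have "ch v = (\<Prod>m\<in>{k..<2*k}. g m)"
  proof -
    have "(\<Prod>m\<in>{k..<2*k}. g m) = (\<Prod>m\<in>{0..<k}. g (m + k))"
      using prod.shift_bounds_nat_ivl[of g 0 k k] by (simp add: mult_2)
    also have "\<dots> = ch v" unfolding ch_def g_def using Ed_comb2
      by (auto simp: add.commute atLeast0LessThan intro!: prod.cong)
    finally show ?thesis by simp
  qed
  ultimately have "ch u * ch v = (\<Prod>m\<in>{..<2*k}. g m)"
  proof -
    have e: "{..<2*k} = {..<k} \<union> {k..<2*k}" by auto
    have "prod g ({..<k} \<union> {k..<2*k}) = prod g {..<k} * prod g {k..<2*k}"
      by (rule prod.union_disjoint) auto
    then show "ch u = prod g {..<k} \<Longrightarrow> ch v = prod g {k..<2 * k} \<Longrightarrow> ch u * ch v = prod g {..<2 * k}"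
      unfolding e by simp
  qed
  also have "\<dots> = (if bandu bb k (comb u v) then 1 else 0)"
  proof (cases "bandu bb k (comb u v)")
    case True
    then have "g m = 1" if "m < 2*k" for m using that unfolding g_def bandu_def band_chi_def Ed_def by auto
    then show ?thesis using True by simp
  next
    case False
    then obtain m where m: "m < 2*k" "\<not> nat \<bar>int (comb u v m) - int (comb u v (nx k m))\<bar> \<le> bb"
      unfolding bandu_def by auto
    then have "g m = 0" unfolding g_def band_chi_def Ed_def by auto
    then show ?thesis using False m by (auto intro: prod_zero)
  qed
  finally show ?thesis .
qed

lemma Ysum_eq:
  "mat_trace N (mat_pow N (\<lambda>i j. band_chi bb i j * Xn i j \<omega> / sqrt (2 * real bb)) k) / real N =
   (\<Sum>u\<in>PiE {..<k} (\<lambda>_. {1..N}). (ch u / (real N * sqrt (2 * real bb) ^ k)) * Zw u \<omega>)"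
proof -
  have "mat_trace N (mat_pow N (\<lambda>i j. band_chi bb i j * Xn i j \<omega> / sqrt (2 * real bb)) k) =
      (\<Sum>u\<in>PiE {..<k} (\<lambda>_. {1..N}). \<Prod>m<k. band_chi bb (u m) (u (Suc m mod k)) * Xn (u m) (u (Suc m mod k)) \<omega> / sqrt (2 * real bb))"
    by (rule trace_walk[OF k1])
  also have "\<dots> = (\<Sum>u\<in>PiE {..<k} (\<lambda>_. {1..N}). ch u * Zw u \<omega> / sqrt (2 * real bb) ^ k)"
    unfolding ch_def Zw_def by (simp add: prod.distrib prod_dividef)
  finally show ?thesis by (simp add: sum_divide_distrib mult.commute)
qed

lemma sub2: "{k..<2*k} \<subseteq> {..<2*k}" by (intro subsetI) simp

definition "Kc = (1 + real (2*k) * Cf (2*k)) + (1 + real k * Cf k) * (1 + real k * Cf k)"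

lemma Cv_bound:
  assumes c: "c \<in> PiE {..<2*k} (\<lambda>_. {1..N})"
  shows "\<bar>expectation (PZ {..<2*k} c) - expectation (PZ {..<k} c) * expectation (PZ {k..<2*k} c)\<bar> \<le> Kc"
proof -
  have a: "\<bar>expectation (PZ {..<2*k} c)\<bar> \<le> 1 + real (2*k) * Cf (2*k)" using PZ_int(2)[OF c, of "{..<2*k}"] by simp
  have b1: "\<bar>expectation (PZ {..<k} c)\<bar> \<le> 1 + real k * Cf k" using PZ_int(2)[OF c, of "{..<k}"] by simp
  have b2: "\<bar>expectation (PZ {k..<2*k} c)\<bar> \<le> 1 + real k * Cf k" using PZ_int(2)[OF c sub2] by simp
  have "\<bar>expectation (PZ {..<k} c) * expectation (PZ {k..<2*k} c)\<bar> \<le> (1 + real k * Cf k) * (1 + real k * Cf k)"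
    unfolding abs_mult by (rule mult_mono[OF b1 b2]) (use order_trans[OF abs_ge_zero b1] in auto)
  then show ?thesis using a unfolding Kc_def by linarith
qed

lemma Cv_zero:
  assumes c: "c \<in> PiE {..<2*k} (\<lambda>_. {1..N})"
    and ng: "\<not> (allrep R k c \<and> (\<exists>i<k. \<exists>j<k. (Ed k c i, Ed k c (k + j)) \<in> R))"
  shows "expectation (PZ {..<2*k} c) - expectation (PZ {..<k} c) * expectation (PZ {k..<2*k} c) = 0"
proof (cases "allrep R k c")
  case True
  then have nl: "\<And>i j. i < k \<Longrightarrow> j < k \<Longrightarrow> (Ed k c i, Ed k c (k + j)) \<notin> R" using ng by auto
  have "expectation (PZ {..<2*k} c) = expectation (\<lambda>\<omega>. PZ {..<k} c \<omega> * PZ {k..<2*k} c \<omega>)"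
    by (simp add: PZ_split[abs_def])
  also have "\<dots> = expectation (PZ {..<k} c) * expectation (PZ {k..<2*k} c)"
  proof (rule PZ_indep[OF c])
    fix i j assume i: "i \<in> {..<k}" and j: "j \<in> {k..<2*k}"
    have "j = k + (j - k)" "j - k < k" using j by auto
    then show "(Ed k c i, Ed k c j) \<notin> R" using nl[of i "j - k"] i by auto
  qed auto
  finally show ?thesis by simp
next
  case False
  then obtain m where m: "m < 2*k" "\<And>m'. m' < 2*k \<Longrightarrow> m' \<noteq> m \<Longrightarrow> (Ed k c m, Ed k c m') \<notin> R"
    unfolding allrep_def by auto
  have z: "expectation (PZ {..<2*k} c) = 0" by (rule PZ_zero[OF c _ _ m(2)]) (use m in auto)
  have "expectation (PZ {..<k} c) = 0 \<or> expectation (PZ {k..<2*k} c) = 0"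
  proof (cases "m < k")
    case True then show ?thesis using PZ_zero[OF c _ _ m(2), of "{..<k}"] by auto
  next
    case False then show ?thesis using PZ_zero[OF c sub2 _ m(2)] m(1) by auto
  qed
  then show ?thesis using z by auto
qed

lemma Cf_nonneg: "N \<ge> 1 \<Longrightarrow> 0 \<le> Cf m"
proof -
  assume N: "N \<ge> 1"
  have "integrable M (\<lambda>\<omega>. \<bar>Xn 1 1 \<omega>\<bar> ^ m) \<and> expectation (\<lambda>\<omega>. \<bar>Xn 1 1 \<omega>\<bar> ^ m) \<le> Cf m"
    using mom N by auto
  moreover have "0 \<le> expectation (\<lambda>\<omega>. \<bar>Xn 1 1 \<omega>\<bar> ^ m)" by (rule integral_nonneg_AE) auto
  ultimately show ?thesis by linarith
qed

lemma comb_inj: "inj_on (\<lambda>(u, v). comb u v) (PiE {..<k} (\<lambda>_. {1..N}) \<times> PiE {..<k} (\<lambda>_. {1..N}))"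
proof (rule inj_onI, clarify)
  fix u v u' v' assume u: "u \<in> PiE {..<k} (\<lambda>_. {1..N})" "v \<in> PiE {..<k} (\<lambda>_. {1..N})"
    "u' \<in> PiE {..<k} (\<lambda>_. {1..N})" "v' \<in> PiE {..<k} (\<lambda>_. {1..N})" and e: "comb u v = comb u' v'"
  have "u m = u' m" if "m < k" for m
  proof -
    have "comb u v m = comb u' v' m" using e by simp
    then show ?thesis using that unfolding comb_def by simp
  qed
  then have hu: "u = u'" using u by (intro PiE_ext[of u "{..<k}" "\<lambda>_. {1..N}" u']) auto
  have "v m = v' m" if "m < k" for m
  proof -
    have "comb u v (k + m) = comb u' v' (k + m)" using e by simp
    then show ?thesis using that unfolding comb_def by simp
  qed
  then have "v = v'" using u by (intro PiE_ext[of v "{..<k}" "\<lambda>_. {1..N}" v']) auto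
  then show "u = u' \<and> v = v'" using hu by simp
qed

lemma var_bound:
  assumes N1: "N \<ge> 1"
  shows "variance (\<lambda>\<omega>. mat_trace N (mat_pow N (\<lambda>i j. band_chi bb i j * Xn i j \<omega> / sqrt (2 * real bb)) k) / real N)
    \<le> Kc / (real N ^ 2 * (2 * real bb) ^ k) *
       real (card {c \<in> PiE {..<2*k} (\<lambda>_. {1..N}). bandu bb k c \<and> allrep R k c \<and> (\<exists>i<k. \<exists>j<k. (Ed k c i, Ed k c (k + j)) \<in> R)})"
proof -
  define PW where "PW = PiE {..<k} (\<lambda>_. {1..N})"
  define D where "D = real N ^ 2 * (2 * real bb) ^ k"
  define w where "w u = ch u / (real N * sqrt (2 * real bb) ^ k)" for u
  define Good where "Good c = (bandu bb k c \<and> allrep R k c \<and> (\<exists>i<k. \<exists>j<k. (Ed k c i, Ed k c (k + j)) \<in> R))" for c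
  have fPW: "finite PW" unfolding PW_def by (simp add: finite_PiE)
  have Kc0: "0 \<le> Kc"
  proof -
    have a: "0 \<le> Cf (2*k)" "0 \<le> Cf k" using Cf_nonneg[OF N1] by auto
    have "0 \<le> 1 + real (2*k) * Cf (2*k)" using a by simp
    moreover have "0 \<le> 1 + real k * Cf k" using a by simp
    ultimately show ?thesis unfolding Kc_def by simp
  qed
  have D0: "0 \<le> D" unfolding D_def by simp
  have intZ: "integrable M (Zw u)" if "u \<in> PW" for u
    unfolding Zw1[of u u] using PZ_int(1)[OF comb_in[OF that[unfolded PW_def] that[unfolded PW_def]]] by auto
  have ZZ: "(\<lambda>\<omega>. Zw u \<omega> * Zw v \<omega>) = PZ {..<2*k} (comb u v)" for u v
    unfolding Zw1[of u v] Zw2[of v u] by (simp add: PZ_split[abs_def])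
  have intZZ: "integrable M (\<lambda>\<omega>. Zw u \<omega> * Zw v \<omega>)" if "u \<in> PW" "v \<in> PW" for u v
    unfolding ZZ using PZ_int(1)[OF comb_in[OF that[unfolded PW_def]]] by auto
  have "variance (\<lambda>\<omega>. mat_trace N (mat_pow N (\<lambda>i j. band_chi bb i j * Xn i j \<omega> / sqrt (2 * real bb)) k) / real N)
      = variance (\<lambda>\<omega>. \<Sum>u\<in>PW. w u * Zw u \<omega>)"
    unfolding Ysum_eq PW_def w_def ..
  also have "\<dots> = (\<Sum>u\<in>PW. \<Sum>v\<in>PW. w u * w v * (expectation (\<lambda>\<omega>. Zw u \<omega> * Zw v \<omega>) - expectation (Zw u) * expectation (Zw v)))"
    by (rule var_sum[OF fPW intZ intZZ])
  also have "\<dots> \<le> (\<Sum>u\<in>PW. \<Sum>v\<in>PW. (if Good (comb u v) then Kc / D else 0))"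
  proof (intro sum_mono)
    fix u v assume u: "u \<in> PW" and v: "v \<in> PW"
    define c where "c = comb u v"
    have c: "c \<in> PiE {..<2*k} (\<lambda>_. {1..N})" unfolding c_def using comb_in u v PW_def by auto
    have cv: "expectation (\<lambda>\<omega>. Zw u \<omega> * Zw v \<omega>) - expectation (Zw u) * expectation (Zw v)
        = expectation (PZ {..<2*k} c) - expectation (PZ {..<k} c) * expectation (PZ {k..<2*k} c)"
      unfolding ZZ c_def using Zw1[of u v] Zw2[of v u] by simp
    have ww: "w u * w v = (if bandu bb k c then 1 else 0) / D"
    proof -
      have s2: "sqrt (2 * real bb) * sqrt (2 * real bb) = 2 * real bb" by simp
      have sq: "sqrt (2 * real bb) ^ k * sqrt (2 * real bb) ^ k = (2 * real bb) ^ k"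
        by (metis power_mult_distrib s2)
      have "(real N * sqrt (2 * real bb) ^ k) * (real N * sqrt (2 * real bb) ^ k) = real N ^ 2 * (sqrt (2 * real bb) ^ k * sqrt (2 * real bb) ^ k)"
        by (simp add: power2_eq_square mult_ac)
      then have dd: "(real N * sqrt (2 * real bb) ^ k) * (real N * sqrt (2 * real bb) ^ k) = D"
        unfolding D_def sq .
      have "w u * w v = (ch u * ch v) / ((real N * sqrt (2 * real bb) ^ k) * (real N * sqrt (2 * real bb) ^ k))"
        unfolding w_def by simp
      then show ?thesis unfolding dd c_def ch_comb .
    qed
    show "w u * w v * (expectation (\<lambda>\<omega>. Zw u \<omega> * Zw v \<omega>) - expectation (Zw u) * expectation (Zw v))
        \<le> (if Good (comb u v) then Kc / D else 0)"
      unfolding cv ww c_def[symmetric]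
    proof (cases "Good c")
      case True
      have bnd: "(expectation (PZ {..<2*k} c) - expectation (PZ {..<k} c) * expectation (PZ {k..<2*k} c)) \<le> Kc"
        using Cv_bound[OF c] by (simp add: abs_le_iff)
      have "(if bandu bb k c then 1 else 0) / D * (expectation (PZ {..<2*k} c) - expectation (PZ {..<k} c) * expectation (PZ {k..<2*k} c))
          = (expectation (PZ {..<2*k} c) - expectation (PZ {..<k} c) * expectation (PZ {k..<2*k} c)) / D"
        using True unfolding Good_def by simp
      also have "\<dots> \<le> Kc / D" by (rule divide_right_mono[OF bnd D0])
      finally have "(if bandu bb k c then 1 else 0) / D * (expectation (PZ {..<2*k} c) - expectation (PZ {..<k} c) * expectation (PZ {k..<2*k} c))
          \<le> Kc / D" .
      then show "(if bandu bb k c then 1 else 0) / D * (expectation (PZ {..<2*k} c) - expectation (PZ {..<k} c) * expectation (PZ {k..<2*k} c))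
          \<le> (if Good c then Kc / D else 0)" using True by simp
    next
      case False
      then have "bandu bb k c \<Longrightarrow> \<not> (allrep R k c \<and> (\<exists>i<k. \<exists>j<k. (Ed k c i, Ed k c (k + j)) \<in> R))"
        unfolding Good_def by auto
      then have "(if bandu bb k c then 1 else 0) / D * (expectation (PZ {..<2*k} c) - expectation (PZ {..<k} c) * expectation (PZ {k..<2*k} c)) = 0"
        using Cv_zero[OF c] by auto
      then show "(if bandu bb k c then 1 else 0) / D * (expectation (PZ {..<2*k} c) - expectation (PZ {..<k} c) * expectation (PZ {k..<2*k} c))
          \<le> (if Good c then Kc / D else 0)" using False by (simp only: if_False order_refl)
    qed
  qed
  also have "\<dots> = (\<Sum>p\<in>PW \<times> PW. (if Good (comb (fst p) (snd p)) then Kc / D else 0))"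
    by (simp add: sum.cartesian_product case_prod_beta)
  also have "\<dots> = (\<Sum>p\<in>{p \<in> PW \<times> PW. Good (comb (fst p) (snd p))}. Kc / D)"
    by (rule sum.inter_filter[symmetric]) (use fPW in simp)
  also have "\<dots> = Kc / D * real (card {p \<in> PW \<times> PW. Good (comb (fst p) (snd p))})" by simp
  also have "\<dots> \<le> Kc / D * real (card {c \<in> PiE {..<2*k} (\<lambda>_. {1..N}). Good c})"
  proof (rule mult_left_mono)
    have "card {p \<in> PW \<times> PW. Good (comb (fst p) (snd p))} \<le> card {c \<in> PiE {..<2*k} (\<lambda>_. {1..N}). Good c}"
    proof (rule card_inj_on_le[of "\<lambda>(u, v). comb u v"])
      show "inj_on (\<lambda>(u, v). comb u v) {p \<in> PW \<times> PW. Good (comb (fst p) (snd p))}"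
        by (rule inj_on_subset[OF comb_inj]) (auto simp: PW_def)
      show "(\<lambda>(u, v). comb u v) ` {p \<in> PW \<times> PW. Good (comb (fst p) (snd p))} \<subseteq> {c \<in> PiE {..<2*k} (\<lambda>_. {1..N}). Good c}"
        using comb_in unfolding PW_def by auto
      show "finite {c \<in> PiE {..<2*k} (\<lambda>_. {1..N}). Good c}" by (simp add: finite_PiE)
    qed
    then show "real (card {p \<in> PW \<times> PW. Good (comb (fst p) (snd p))}) \<le> real (card {c \<in> PiE {..<2*k} (\<lambda>_. {1..N}). Good c})"
      by simp
    show "0 \<le> Kc / D" using Kc0 D0 by simp
  qed
  finally show ?thesis unfolding D_def Good_def .
qed

lemma ratio_bound:
  fixes x :: real and n :: nat
  assumes x: "x \<ge> 1" and n: "n \<ge> 1"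
  shows "(2*x+1)^(n-1) / (2*x)^n \<le> 3^n / x"
proof -
  have a: "(2*x+1)^(n-1) \<le> (3*x)^(n-1)" using x by (intro power_mono) auto
  have "(3*x)^(n-1) * x = 3^(n-1) * x^n"
  proof -
    have "x^n = x^(n-1) * x" using n by (metis Suc_diff_1 less_le_trans zero_less_one power_Suc2)
    then show ?thesis by (simp add: power_mult_distrib)
  qed
  also have "\<dots> \<le> 3^n * (2*x)^n"
  proof (rule mult_mono)
    show "(3::real)^(n-1) \<le> 3^n" by (intro power_increasing) auto
    show "x^n \<le> (2*x)^n" using x by (intro power_mono) auto
  qed (use x in auto)
  finally have "(2*x+1)^(n-1) * x \<le> 3^n * (2*x)^n"
    using mult_right_mono[OF a, of x] x by linarith
  then show ?thesis using x by (simp add: field_simps)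
qed

lemma var_final:
  assumes N1: "N \<ge> 1" and b1: "bb \<ge> 1"
  shows "variance (\<lambda>\<omega>. mat_trace N (mat_pow N (\<lambda>i j. band_chi bb i j * Xn i j \<omega> / sqrt (2 * real bb)) k) / real N)
    \<le> ((1 + real (2*k) * Cf (2*k)) + (1 + real k * Cf k) * (1 + real k * Cf k)) * real (k*k*4^k*(2*k*B+1)^(2*k)) * 3^k
       * (real (Max ((\<lambda>p. card {(q, r, s). q \<in> {1..N} \<and> r \<in> {1..N} \<and> s \<in> {1..N} \<and> ((p, q), (r, s)) \<in> R}) ` {1..N}))
          / (real N * real bb))"
proof -
  define Mx where "Mx = Max ((\<lambda>p. card {(q, r, s). q \<in> {1..N} \<and> r \<in> {1..N} \<and> s \<in> {1..N} \<and> ((p, q), (r, s)) \<in> R}) ` {1..N})"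
  define Gd where "Gd = card {c \<in> PiE {..<2*k} (\<lambda>_. {1..N}). bandu bb k c \<and> allrep R k c \<and> (\<exists>i<k. \<exists>j<k. (Ed k c i, Ed k c (k + j)) \<in> R)}"
  define C0 where "C0 = k*k*4^k*(2*k*B+1)^(2*k)"
  have TT: "card TT \<le> N * Mx"
  proof -
    have "card TT \<le> (\<Sum>p\<in>{1..N}. card {(q, r, s). q \<in> {1..N} \<and> r \<in> {1..N} \<and> s \<in> {1..N} \<and> ((p, q), (r, s)) \<in> R})"
      by (rule card_TT)
    also have "\<dots> \<le> (\<Sum>p\<in>{1..N}. Mx)"
      unfolding Mx_def by (intro sum_mono Max_ge) auto
    finally show ?thesis by simp
  qed
  have Gd: "Gd \<le> C0 * N * Mx * (2*bb+1)^(k-1)"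
  proof -
    have "Gd \<le> k * k * card G0" unfolding Gd_def by (rule card_good)
    also have "\<dots> \<le> k * k * (4^k * card TT * (2*bb+1)^(k-1) * (2*k*B+1)^(2*k))"
      using card_G0 by simp
    also have "\<dots> \<le> k * k * (4^k * (N * Mx) * (2*bb+1)^(k-1) * (2*k*B+1)^(2*k))"
      using TT by (intro mult_le_mono2 mult_le_mono1) auto
    also have "\<dots> = C0 * N * Mx * (2*bb+1)^(k-1)" unfolding C0_def by (simp add: mult_ac)
    finally show ?thesis .
  qed
  have Kc0: "0 \<le> Kc"
  proof -
    have a: "0 \<le> Cf (2*k)" "0 \<le> Cf k" using Cf_nonneg[OF N1] by auto
    have "0 \<le> 1 + real (2*k) * Cf (2*k)" using a by simp
    moreover have "0 \<le> 1 + real k * Cf k" using a by simp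
    ultimately show ?thesis unfolding Kc_def by simp
  qed
  have Npos: "real N > 0" "real bb \<ge> 1" using N1 b1 by auto
  have "variance (\<lambda>\<omega>. mat_trace N (mat_pow N (\<lambda>i j. band_chi bb i j * Xn i j \<omega> / sqrt (2 * real bb)) k) / real N)
      \<le> Kc / (real N ^ 2 * (2 * real bb) ^ k) * real Gd"
    unfolding Gd_def by (rule var_bound[OF N1])
  also have "\<dots> \<le> Kc / (real N ^ 2 * (2 * real bb) ^ k) * (real C0 * real N * real Mx * (2 * real bb + 1)^(k-1))"
  proof (rule mult_left_mono)
    have "real Gd \<le> real (C0 * N * Mx * (2*bb+1)^(k-1))" using Gd by linarith
    then show "real Gd \<le> real C0 * real N * real Mx * (2 * real bb + 1)^(k-1)" by (simp add: add.commute)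
  qed (use Kc0 in simp)
  also have "\<dots> = Kc * real C0 * (real Mx / (real N * real bb)) * (real bb * ((2 * real bb + 1)^(k-1) / (2 * real bb)^k))"
    using Npos by (simp add: field_simps power2_eq_square)
  also have "\<dots> \<le> Kc * real C0 * (real Mx / (real N * real bb)) * (real bb * (3^k / real bb))"
  proof (rule mult_left_mono)
    show "real bb * ((2 * real bb + 1)^(k-1) / (2 * real bb)^k) \<le> real bb * (3^k / real bb)"
      using ratio_bound[OF Npos(2) k1] Npos by (intro mult_left_mono) auto
    show "0 \<le> Kc * real C0 * (real Mx / (real N * real bb))" using Kc0 by simp
  qed
  also have "\<dots> = Kc * real C0 * 3^k * (real Mx / (real N * real bb))" using Npos by simp
  finally show ?thesis unfolding Kc_def C0_def Mx_def by simp
qed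

end


theorem mainTheorem16:
  fixes M :: "nat \<Rightarrow> 'a measure"
    and b :: "nat \<Rightarrow> nat"
    and R :: "nat \<Rightarrow> ((nat \<times> nat) \<times> (nat \<times> nat)) set"
    and X :: "nat \<Rightarrow> nat \<Rightarrow> nat \<Rightarrow> 'a \<Rightarrow> real"
    and B :: nat
  assumes prob: "\<And>N. prob_space (M N)"
    and b_pos: "\<And>N. b N > 0"
    and b_inf: "filterlim b at_top at_top"
    and b_small: "(\<lambda>N. real (b N)) \<in> o(\<lambda>N. real N)"
    and equiv: "\<And>N. equiv ({1..N} \<times> {1..N}) (R N)"
    and R_swap: "\<And>N p q. p \<in> {1..N} \<Longrightarrow> q \<in> {1..N} \<Longrightarrow> ((p, q), (q, p)) \<in> R N"
    and O1: "(\<lambda>N. real (Max ((\<lambda>p. card {(q, r, s). q \<in> {1..N} \<and> r \<in> {1..N} \<and> s \<in> {1..N}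
                  \<and> ((p, q), (r, s)) \<in> R N}) ` {1..N})))
             \<in> o(\<lambda>N. real (b N) ^ 2)"
    and O2: "\<And>N p q r. p \<in> {1..N} \<Longrightarrow> q \<in> {1..N} \<Longrightarrow> r \<in> {1..N} \<Longrightarrow>
               card {s \<in> {1..N}. ((p, q), (r, s)) \<in> R N} \<le> B"
    and O3: "(\<lambda>N. real (card {(p, q, r). p \<in> {1..N} \<and> q \<in> {1..N} \<and> r \<in> {1..N}
                  \<and> ((p, q), (q, r)) \<in> R N \<and> r \<noteq> p}))
             \<in> o(\<lambda>N. real (b N) ^ 2)"
    and X_meas: "\<And>N i j. X N i j \<in> borel_measurable (M N)"
    and X_sym: "\<And>N i j. X N i j = X N j i"
    and X_mean: "\<And>N i j. i \<in> {1..N} \<Longrightarrow> j \<in> {1..N} \<Longrightarrow>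
                   integrable (M N) (X N i j) \<and> prob_space.expectation (M N) (X N i j) = 0"
    and X_var: "\<And>N i j. i \<in> {1..N} \<Longrightarrow> j \<in> {1..N} \<Longrightarrow>
                   integrable (M N) (\<lambda>\<omega>. (X N i j \<omega>)\<^sup>2) \<and>
                   prob_space.expectation (M N) (\<lambda>\<omega>. (X N i j \<omega>)\<^sup>2) = 1"
    and X_moments: "\<And>m. \<exists>C. \<forall>N i j. i \<in> {1..N} \<longrightarrow> j \<in> {1..N} \<longrightarrow>
                   integrable (M N) (\<lambda>\<omega>. \<bar>X N i j \<omega>\<bar> ^ m) \<and>
                   prob_space.expectation (M N) (\<lambda>\<omega>. \<bar>X N i j \<omega>\<bar> ^ m) \<le> C"
    and X_indep: "\<And>N. prob_space.indep_vars (M N) (\<lambda>C. PiM C (\<lambda>_. borel))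
                   (\<lambda>C \<omega>. \<lambda>pq\<in>C. X N (fst pq) (snd pq) \<omega>) (({1..N} \<times> {1..N}) // R N)"
  shows "\<forall>k::nat. (\<lambda>N. prob_space.variance (M N) (Y_stat b X k N)) \<longlonglongrightarrow> 0"
proof
  fix k :: nat
  show "(\<lambda>N. prob_space.variance (M N) (Y_stat b X k N)) \<longlonglongrightarrow> 0"
  proof (cases "k = 0")
    case True
    have "prob_space.variance (M N) (Y_stat b X k N) = 0" for N
    proof -
      interpret P: prob_space "M N" by (rule prob)
      define c where "c = mat_trace N (mat_pow N (\<lambda>i j. 0) 0) / real N"
      have Y: "Y_stat b X k N = (\<lambda>\<omega>. c)"
        unfolding Y_stat_def c_def True mat_trace_def by (simp add: fun_eq_iff)
      show ?thesis unfolding Y by (simp add: P.prob_space)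
    qed
    then show ?thesis by simp
  next
    case False
    then have k1: "k \<ge> 1" by simp
    have "\<forall>m. \<exists>C. \<forall>N i j. i \<in> {1..N} \<longrightarrow> j \<in> {1..N} \<longrightarrow>
        integrable (M N) (\<lambda>\<omega>. \<bar>X N i j \<omega>\<bar> ^ m) \<and> prob_space.expectation (M N) (\<lambda>\<omega>. \<bar>X N i j \<omega>\<bar> ^ m) \<le> C"
      using X_moments by blast
    then have "\<exists>Cf. \<forall>m. \<forall>N i j. i \<in> {1..N} \<longrightarrow> j \<in> {1..N} \<longrightarrow>
        integrable (M N) (\<lambda>\<omega>. \<bar>X N i j \<omega>\<bar> ^ m) \<and> prob_space.expectation (M N) (\<lambda>\<omega>. \<bar>X N i j \<omega>\<bar> ^ m) \<le> Cf m"
      by (rule choice)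
    then obtain Cf :: "nat \<Rightarrow> real" where Cf: "\<And>m N i j. i \<in> {1..N} \<Longrightarrow> j \<in> {1..N} \<Longrightarrow>
        integrable (M N) (\<lambda>\<omega>. \<bar>X N i j \<omega>\<bar> ^ m) \<and> prob_space.expectation (M N) (\<lambda>\<omega>. \<bar>X N i j \<omega>\<bar> ^ m) \<le> Cf m"
      by blast
    define Kx where "Kx = ((1 + real (2*k) * Cf (2*k)) + (1 + real k * Cf k) * (1 + real k * Cf k)) * real (k*k*4^k*(2*k*B+1)^(2*k)) * 3^k"
    define Mx where "Mx N = real (Max ((\<lambda>p. card {(q, r, s). q \<in> {1..N} \<and> r \<in> {1..N} \<and> s \<in> {1..N}
                  \<and> ((p, q), (r, s)) \<in> R N}) ` {1..N}))" for N
    have bound: "prob_space.variance (M N) (Y_stat b X k N) \<le> Kx * (Mx N / (real N * real (b N)))" if N1: "N \<ge> 1" for N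
    proof -
      interpret F: fixN "M N" N k "b N" B "R N" "X N" Cf
        by (intro fixN.intro cnt.intro fixN_axioms.intro prob k1 equiv O2 X_meas X_mean Cf X_indep)
      have b1: "b N \<ge> 1" using b_pos[of N] by simp
      have "Y_stat b X k N = (\<lambda>\<omega>. mat_trace N (mat_pow N (\<lambda>i j. band_chi (b N) i j * X N i j \<omega> / sqrt (2 * real (b N))) k) / real N)"
        unfolding Y_stat_def band_matrix_def by (simp add: fun_eq_iff)
      then show ?thesis using F.var_final[OF N1 b1] unfolding Kx_def Mx_def by (simp add: mult.assoc)
    qed
    have t1: "(\<lambda>N. Mx N / (real (b N))^2) \<longlonglongrightarrow> 0"
      using smalloD_tendsto[OF O1] unfolding Mx_def .
    have t2: "(\<lambda>N. real (b N) / real N) \<longlonglongrightarrow> 0"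
      using smalloD_tendsto[OF b_small] .
    have t3: "(\<lambda>N. Mx N / (real N * real (b N))) \<longlonglongrightarrow> 0"
    proof -
      have "(\<lambda>N. Mx N / (real (b N))^2 * (real (b N) / real N)) \<longlonglongrightarrow> 0 * 0"
        by (rule tendsto_mult[OF t1 t2])
      moreover have "eventually (\<lambda>N. Mx N / (real (b N))^2 * (real (b N) / real N) = Mx N / (real N * real (b N))) sequentially"
      proof (rule eventually_sequentiallyI[of 1])
        fix N :: nat assume "N \<ge> 1"
        moreover have "b N > 0" by (rule b_pos)
        ultimately show "Mx N / (real (b N))^2 * (real (b N) / real N) = Mx N / (real N * real (b N))"
          by (simp add: field_simps power2_eq_square)
      qed
      ultimately show ?thesis using Lim_transform_eventually by fastforce
    qed
    have t4: "(\<lambda>N. Kx * (Mx N / (real N * real (b N)))) \<longlonglongrightarrow> 0"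
      using tendsto_mult_right_zero[OF t3] .
    show ?thesis
    proof (rule real_tendsto_sandwich[OF _ _ tendsto_const t4])
      show "eventually (\<lambda>N. 0 \<le> prob_space.variance (M N) (Y_stat b X k N)) sequentially"
        using prob_space.variance_positive[OF prob] by simp
      show "eventually (\<lambda>N. prob_space.variance (M N) (Y_stat b X k N) \<le> Kx * (Mx N / (real N * real (b N)))) sequentially"
        by (rule eventually_sequentiallyI[of 1]) (rule bound)
    qed
  qed
qed


end
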